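(* Let $c,g,d\in\mathbb{R}$, $t_0>0$, and let $\theta(x,t)$ be a solution on $\mathbb{R}\times[0,t_0]$ of $$\theta_t+c\,\theta_x+g\,\theta\theta_x+d\,\theta_{xxx}=0$$ which is smooth and such that $\partial_t^2\theta$ and $\partial_x^k\theta$ for $0\le k\le 5$ satisfy $|\cdot|\le C(1+x^2)^{-1}$ uniformly for $t\in[0,t_0]$. For a space step $h>0$ and time step $\tau>0$ put $x_i=ih$ ($i\in\mathbb{Z}$), $t_j=j\tau$, and define $\theta^j_i$ by $\theta^0_i=\theta(x_i,0)$ and the explicit scheme $$\frac{\theta^{j+1}_i-\theta^j_i}{\tau}+c\frac{\theta^j_{i+1}-\theta^j_{i-1}}{2h}+g\,\theta^j_i\frac{\theta^j_{i+1}-\theta^j_{i-1}}{2h}+e\frac{\theta^j_{i+2}-2\theta^j_{i+1}+2\theta^j_{i-1}-\theta^j_{i-2}}{2h^3}=0,\qquad e=d-\frac{c h^2}{6}.$$ Assume $\tau\le K h^6$ for a fixed constant $K$. Then there is a constant $M$, independent of $h$ and $\tau$, such that for all sufficiently small $h$ and all $j$ with $j\tau\le t_0$, $$\Big(\sum_{i\in\mathbb{Z}}\big(\theta^j_i-\theta(x_i,t_j)\big)^2h\Big)^{1/2}\le M(\tau+h^2).$$ In particular the scheme converges in the discrete $L^2$ norm to the exact solution. *)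

theory Defs
  imports "HOL-Analysis.Analysis"
begin

definition dx :: "nat \<Rightarrow> (real \<Rightarrow> real \<Rightarrow> real) \<Rightarrow> real \<Rightarrow> real \<Rightarrow> real" where
  "dx k \<theta> x t = (deriv ^^ k) (\<lambda>y. \<theta> y t) x"

fun kdv_scheme :: "real \<Rightarrow> real \<Rightarrow> real \<Rightarrow> real \<Rightarrow> real \<Rightarrow> (int \<Rightarrow> real) \<Rightarrow> nat \<Rightarrow> int \<Rightarrow> real" where
  "kdv_scheme c g d h \<tau> u0 0 i = u0 i"
| "kdv_scheme c g d h \<tau> u0 (Suc j) i =
     (let u = kdv_scheme c g d h \<tau> u0 j; e = d - c * h\<^sup>2 / 6 in
      u i - \<tau> * ( c * (u (i+1) - u (i-1)) / (2*h)
                 + g * u i * (u (i+1) - u (i-1)) / (2*h)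
                 + e * (u (i+2) - 2 * u (i+1) + 2 * u (i-1) - u (i-2)) / (2 * h^3)))"

end

theory Submission
  imports Defs
begin


definition L2 :: "(int \<Rightarrow> real) \<Rightarrow> bool" where
  "L2 f \<longleftrightarrow> (\<lambda>i. (f i)\<^sup>2) summable_on UNIV"
definition sq :: "(int \<Rightarrow> real) \<Rightarrow> real" where
  "sq f = infsum (\<lambda>i. (f i)\<^sup>2) UNIV"

lemma has_sum_diff':
  fixes f g :: "'a \<Rightarrow> real"
  assumes "(f has_sum a) A" "(g has_sum b) A"
  shows "((\<lambda>x. f x - g x) has_sum (a - b)) A"
proof -
  have "((\<lambda>x. - g x) has_sum (- b)) A" using assms(2) by (simp add: has_sum_uminus)
  from has_sum_add[OF assms(1) this] show ?thesis by simp
qed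

lemma summable_cmp:
  fixes g :: "'a \<Rightarrow> real"
  assumes "f summable_on A" "\<And>x. x \<in> A \<Longrightarrow> \<bar>g x\<bar> \<le> f x"
  shows "g summable_on A"
proof -
  have "Infinite_Sum.abs_summable_on f A" using assms(1) summable_on_iff_abs_summable_on_real by blast
  then have "Infinite_Sum.abs_summable_on g A"
    by (rule Infinite_Sum.abs_summable_on_comparison_test) (use assms(2) in fastforce)
  then show ?thesis using summable_on_iff_abs_summable_on_real by blast
qed

lemma L2_has_sum: "L2 f \<Longrightarrow> ((\<lambda>i. (f i)\<^sup>2) has_sum sq f) UNIV"
  unfolding L2_def sq_def by simp

lemma sq_nonneg: "sq f \<ge> 0"
  unfolding sq_def by (rule infsum_nonneg) simp

lemma bij_shift: "bij_betw (\<lambda>i::int. i + k) UNIV UNIV"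
  by (rule bij_betwI[where g="\<lambda>i. i - k"]) auto

lemma has_sum_shift:
  fixes F :: "int \<Rightarrow> real"
  shows "((\<lambda>i. F (i + k)) has_sum s) UNIV \<longleftrightarrow> (F has_sum s) UNIV"
  using has_sum_reindex_bij_betw[OF bij_shift[of k], of F s] by simp

lemma L2_shift: "L2 f \<Longrightarrow> L2 (\<lambda>i. f (i + k))"
  unfolding L2_def using summable_on_reindex_bij_betw[OF bij_shift[of k], of "\<lambda>i. (f i)\<^sup>2"] by simp

lemma sq_shift: "L2 f \<Longrightarrow> sq (\<lambda>i. f (i + k)) = sq f"
  unfolding sq_def using infsum_reindex_bij_betw[OF bij_shift[of k], of "\<lambda>i. (f i)\<^sup>2"] by simp

lemma L2_shift_has_sum: "L2 f \<Longrightarrow> ((\<lambda>i. (f (i + k))\<^sup>2) has_sum sq f) UNIV"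
  using L2_has_sum[OF L2_shift[of f k]] sq_shift[of f k] by simp

lemma sq_sum_le: "(a + b)\<^sup>2 \<le> 2 * a\<^sup>2 + 2 * (b::real)\<^sup>2"
proof -
  have "0 \<le> (a - b)\<^sup>2" by simp
  then show ?thesis by (simp add: power2_eq_square algebra_simps)
qed

lemma abs_prod_le: "\<bar>a * b\<bar> \<le> a\<^sup>2 + (b::real)\<^sup>2"
proof -
  have "0 \<le> (\<bar>a\<bar> - \<bar>b\<bar>)\<^sup>2" by simp
  then have "\<bar>a\<bar> * (\<bar>b\<bar> * 2) \<le> a * a + b * b" by (simp add: power2_eq_square algebra_simps)
  moreover have "0 \<le> \<bar>a\<bar> * \<bar>b\<bar>" by simp
  moreover have "\<bar>a\<bar> * (\<bar>b\<bar> * 2) = 2 * (\<bar>a\<bar> * \<bar>b\<bar>)" by simp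
  ultimately have "\<bar>a\<bar> * \<bar>b\<bar> \<le> a * a + b * b" by linarith
  then show ?thesis by (simp add: abs_mult power2_eq_square)
qed

lemma L2_add: "L2 f \<Longrightarrow> L2 g \<Longrightarrow> L2 (\<lambda>i. f i + g i)"
  unfolding L2_def
  apply (rule summable_cmp[where f="\<lambda>i. 2 * (f i)\<^sup>2 + 2 * (g i)\<^sup>2"])
   apply (intro summable_on_add summable_on_cmult_right; assumption)
  using sq_sum_le by simp

lemma L2_bmult: "L2 f \<Longrightarrow> (\<And>i. \<bar>a i\<bar> \<le> B) \<Longrightarrow> L2 (\<lambda>i. a i * f i)"
  unfolding L2_def
  apply (rule summable_cmp[where f="\<lambda>i. B\<^sup>2 * (f i)\<^sup>2"])
   apply (intro summable_on_cmult_right; assumption)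
  apply (simp add: power_mult_distrib)
  by (metis abs_ge_zero abs_le_square_iff mult_right_mono zero_le_power2 power2_abs order.trans abs_of_nonneg)

lemma L2_cmult: "L2 f \<Longrightarrow> L2 (\<lambda>i. c * f i)"
  using L2_bmult[of f "\<lambda>_. c" "\<bar>c\<bar>"] by simp

lemma L2_minus: "L2 f \<Longrightarrow> L2 g \<Longrightarrow> L2 (\<lambda>i. f i - g i)"
  using L2_add[of f "\<lambda>i. (-1) * g i"] L2_cmult[of g "-1"] by simp

lemma L2_prod_summable:
  assumes "L2 f" "L2 g" "\<And>i. \<bar>a i\<bar> \<le> B"
  shows "(\<lambda>i. a i * f i * g i) summable_on UNIV"
proof (rule summable_cmp[where f="\<lambda>i. B * (f i)\<^sup>2 + B * (g i)\<^sup>2"])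
  show "(\<lambda>i. B * (f i)\<^sup>2 + B * (g i)\<^sup>2) summable_on UNIV"
    using assms unfolding L2_def by (intro summable_on_add summable_on_cmult_right)
  fix i
  have "\<bar>f i * g i\<bar> \<le> (f i)\<^sup>2 + (g i)\<^sup>2"
    by (rule abs_prod_le)
  moreover have "B \<ge> 0" using assms(3)[of 0] by simp
  ultimately have "\<bar>a i\<bar> * \<bar>f i * g i\<bar> \<le> B * ((f i)\<^sup>2 + (g i)\<^sup>2)"
    using assms(3)[of i] by (intro mult_mono) auto
  then show "\<bar>a i * f i * g i\<bar> \<le> B * (f i)\<^sup>2 + B * (g i)\<^sup>2"
    by (simp add: abs_mult algebra_simps)
qed

lemma L2_prod_has_sum:
  assumes "L2 f" "L2 g" "\<And>i. \<bar>a i\<bar> \<le> B"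
  shows "((\<lambda>i. a i * f i * g i) has_sum infsum (\<lambda>i. a i * f i * g i) UNIV) UNIV"
  using L2_prod_summable[OF assms] by simp

lemma sq_ge_term: "L2 f \<Longrightarrow> (f i)\<^sup>2 \<le> sq f"
proof -
  assume "L2 f"
  have "infsum (\<lambda>i. (f i)\<^sup>2) {i} \<le> infsum (\<lambda>i. (f i)\<^sup>2) UNIV"
    by (rule infsum_mono_neutral) (use \<open>L2 f\<close> in \<open>auto simp: L2_def\<close>)
  then show ?thesis by (simp add: sq_def)
qed



definition wt :: "real \<Rightarrow> int \<Rightarrow> real" where
  "wt h i = 1 / (1 + (real_of_int i * h)\<^sup>2)"

lemma wt_pos: "wt h i > 0" unfolding wt_def by (simp add: add_pos_nonneg)
lemma inv_le1: "(s::real) \<ge> 0 \<Longrightarrow> 1 / (1 + s) \<le> 1" by (simp add: divide_le_eq)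
lemma frac_le1: "(s::real) \<ge> 0 \<Longrightarrow> s / (1 + s) \<le> 1" by (simp add: divide_le_eq)
lemma wt_le1: "wt h i \<le> 1" unfolding wt_def by (rule inv_le1) simp
lemma wt_neg: "wt h (- i) = wt h i" unfolding wt_def by simp

lemma wt_step:
  assumes h: "h > 0"
  shows "h * wt h (int N + 1) \<le> 2 * ((real (N+1) * h) / (1 + real (N+1) * h) - (real N * h) / (1 + real N * h))"
proof -
  define x where "x = real N * h"
  define y where "y = real (N+1) * h"
  have xy: "0 \<le> x" "x \<le> y" "y = x + h" using h by (auto simp: x_def y_def algebra_simps)
  have e: "y / (1 + y) - x / (1 + x) = h / ((1 + y) * (1 + x))"
    using xy h by (simp add: field_simps)
  have "(1 + y) * (1 + x) \<le> (1 + y) * (1 + y)" using xy by (intro mult_left_mono) auto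
  also have "\<dots> \<le> 2 * (1 + y\<^sup>2)" using sq_sum_le[of 1 y] by (simp add: power2_eq_square)
  finally have le: "(1 + y) * (1 + x) \<le> 2 * (1 + y\<^sup>2)" .
  have pos: "0 < (1 + y) * (1 + x)" using xy by auto
  have "h * wt h (int N + 1) = h / (1 + y\<^sup>2)" unfolding wt_def y_def by (simp add: algebra_simps)
  also have "\<dots> = (2 * h) / (2 * (1 + y\<^sup>2))"
    using add_pos_nonneg[of 1 "y\<^sup>2"] by (simp add: field_simps)
  also have "\<dots> \<le> (2 * h) / ((1 + y) * (1 + x))"
  proof -
    have p2: "0 < 2 * (1 + y\<^sup>2)" by (simp add: add_pos_nonneg)
    show ?thesis by (rule divide_left_mono[OF le _ mult_pos_pos[OF p2 pos]]) (use h in simp)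
  qed
  also have "\<dots> = 2 * (h / ((1 + y) * (1 + x)))" by simp
  finally have "h * wt h (int N + 1) \<le> 2 * (y / (1 + y) - x / (1 + x))" using e by simp
  then show ?thesis unfolding x_def y_def .
qed

lemma wt_sym_sum:
  assumes h: "h > 0"
  shows "(\<Sum>i\<in>{- int N..int N}. h * wt h i) \<le> h + 4 * ((real N * h) / (1 + real N * h))"
proof (induction N)
  case 0
  then show ?case by (simp add: wt_def)
next
  case (Suc N)
  have set: "{- int (Suc N)..int (Suc N)} = insert (int N + 1) (insert (- (int N + 1)) {- int N..int N})"
    by auto
  have "(\<Sum>i\<in>{- int (Suc N)..int (Suc N)}. h * wt h i)
      = h * wt h (int N + 1) + h * wt h (- (int N + 1)) + (\<Sum>i\<in>{- int N..int N}. h * wt h i)"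
    unfolding set by simp
  also have "\<dots> = 2 * (h * wt h (int N + 1)) + (\<Sum>i\<in>{- int N..int N}. h * wt h i)"
    using wt_neg[of h "int N + 1"] by simp
  also have "\<dots> \<le> h + 4 * ((real (Suc N) * h) / (1 + real (Suc N) * h))"
    using wt_step[OF h, of N] Suc by simp
  finally show ?case .
qed

lemma wt_finite_sum:
  assumes h: "h > 0" "h \<le> 1" and F: "finite F"
  shows "(\<Sum>i\<in>F. h * wt h i) \<le> 5"
proof -
  obtain N where N: "F \<subseteq> {- int N..int N}"
  proof -
    have "bdd_above (abs ` F)" using F by simp
    then obtain M where "\<forall>i\<in>F. \<bar>i\<bar> \<le> M" by (auto simp: bdd_above_def)
    then have "F \<subseteq> {- int (nat M)..int (nat M)}" by fastforce
    then show ?thesis using that by blast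
  qed
  have "(\<Sum>i\<in>F. h * wt h i) \<le> (\<Sum>i\<in>{- int N..int N}. h * wt h i)"
  proof (rule sum_mono2)
    show "finite {- int N..int N}" by simp
    show "F \<subseteq> {- int N..int N}" by (rule N)
    fix b show "0 \<le> h * wt h b" using h wt_pos[of h b] by simp
  qed
  also have "\<dots> \<le> h + 4 * ((real N * h) / (1 + real N * h))" by (rule wt_sym_sum[OF h(1)])
  also have "(real N * h) / (1 + real N * h) \<le> 1" using h by (intro frac_le1) simp
  then have "h + 4 * ((real N * h) / (1 + real N * h)) \<le> 5" using h by linarith
  finally show ?thesis .
qed

lemma wt_summable:
  assumes h: "h > 0" "h \<le> 1"
  shows "(\<lambda>i. h * wt h i) summable_on UNIV" and "infsum (\<lambda>i. h * wt h i) UNIV \<le> 5"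
proof -
  show s: "(\<lambda>i. h * wt h i) summable_on UNIV"
  proof (rule nonneg_bdd_above_summable_on)
    fix x show "0 \<le> h * wt h x" using h wt_pos[of h x] by simp
  next
    show "bdd_above (sum (\<lambda>i. h * wt h i) ` {F. F \<subseteq> UNIV \<and> finite F})"
      by (rule bdd_aboveI2[where M=5]) (use wt_finite_sum[OF h] in blast)
  qed
  show "infsum (\<lambda>i. h * wt h i) UNIV \<le> 5"
    by (rule infsum_le_finite_sums[OF s]) (use wt_finite_sum[OF h] in auto)
qed

lemma L2_wt:
  assumes h: "h > 0" "h \<le> 1" and b: "\<And>i. \<bar>f i\<bar> \<le> A * wt h i"
  shows "L2 f" "h * sq f \<le> 5 * A\<^sup>2"
proof -
  have "0 \<le> A * wt h 0" using b[of 0] by (rule order.trans[OF abs_ge_zero])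
  then have A: "A \<ge> 0" using wt_pos[of h 0] by (simp add: zero_le_mult_iff)
  have pt: "(f i)\<^sup>2 \<le> A\<^sup>2 * wt h i" for i
  proof -
    have "\<bar>f i\<bar>\<^sup>2 \<le> (A * wt h i)\<^sup>2" by (rule power_mono[OF b]) simp
    then have "(f i)\<^sup>2 \<le> (A * wt h i)\<^sup>2" by simp
    also have "\<dots> = A\<^sup>2 * (wt h i * wt h i)" by (simp add: power2_eq_square)
    also have "\<dots> \<le> A\<^sup>2 * wt h i" using wt_le1[of h i] wt_pos[of h i]
      by (intro mult_left_mono) (auto simp: mult_le_cancel_left1)
    finally show ?thesis .
  qed
  have s1: "(\<lambda>i. A\<^sup>2 / h * (h * wt h i)) summable_on UNIV"
    using wt_summable(1)[OF h] by (rule summable_on_cmult_right)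
  have eq: "A\<^sup>2 / h * (h * wt h i) = A\<^sup>2 * wt h i" for i using h by simp
  show "L2 f" unfolding L2_def
    by (rule summable_cmp[OF s1]) (use pt eq in simp)
  then have "sq f \<le> infsum (\<lambda>i. A\<^sup>2 / h * (h * wt h i)) UNIV"
    unfolding sq_def L2_def by (intro infsum_mono[OF _ s1]) (use pt eq in auto)
  also have "\<dots> = A\<^sup>2 / h * infsum (\<lambda>i. h * wt h i) UNIV" by (rule infsum_cmult_right') 
  also have "\<dots> \<le> A\<^sup>2 / h * 5" using wt_summable(2)[OF h] h by (intro mult_left_mono) auto
  finally show "h * sq f \<le> 5 * A\<^sup>2" using h by (simp add: field_simps)
qed



lemma L2_shiftm: "L2 f \<Longrightarrow> L2 (\<lambda>i. f (i - k))"
  using L2_shift[of f "-k"] by simp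
lemma L2_shiftm_has_sum: "L2 f \<Longrightarrow> ((\<lambda>i. (f (i - k))\<^sup>2) has_sum sq f) UNIV"
  using L2_shift_has_sum[of f "-k"] by simp

lemma L2_prod2: "L2 f \<Longrightarrow> L2 g \<Longrightarrow> (\<lambda>i. f i * g i) summable_on UNIV"
  using L2_prod_summable[of f g "\<lambda>_. 1" 1] by simp

lemma has_sum_shiftm:
  fixes F :: "int \<Rightarrow> real"
  shows "((\<lambda>i. F (i - k)) has_sum s) UNIV \<longleftrightarrow> (F has_sum s) UNIV"
  using has_sum_shift[of F "-k" s] by simp

lemma corr_has_sum:
  assumes "L2 E"
  shows "((\<lambda>i. E i * E (i + k)) has_sum infsum (\<lambda>i. E i * E (i + k)) UNIV) UNIV"
    and "((\<lambda>i. E i * E (i - k)) has_sum infsum (\<lambda>i. E i * E (i + k)) UNIV) UNIV"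
proof -
  have s: "(\<lambda>i. E i * E (i + k)) summable_on UNIV"
    by (rule L2_prod2[OF assms L2_shift[OF assms]])
  then show 1: "((\<lambda>i. E i * E (i + k)) has_sum infsum (\<lambda>i. E i * E (i + k)) UNIV) UNIV" by simp
  have "((\<lambda>j. E (j + k) * E j) has_sum infsum (\<lambda>i. E i * E (i + k)) UNIV) UNIV"
    using 1 by (simp add: mult.commute)
  then have "((\<lambda>i. E (i - k + k) * E (i - k)) has_sum infsum (\<lambda>i. E i * E (i + k)) UNIV) UNIV"
    using has_sum_shiftm[of "\<lambda>j. E (j + k) * E j" k] by simp
  then show "((\<lambda>i. E i * E (i - k)) has_sum infsum (\<lambda>i. E i * E (i + k)) UNIV) UNIV" by simp
qed

lemma skew_has_sum:
  assumes "L2 E"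
  shows "((\<lambda>i. E i * (p * (E (i+1) - E (i-1)) + q * (E (i+2) - 2 * E (i+1) + 2 * E (i-1) - E (i-2))))
          has_sum 0) UNIV"
proof -
  define P1 where "P1 = infsum (\<lambda>i. E i * E (i + 1)) UNIV"
  define P2 where "P2 = infsum (\<lambda>i. E i * E (i + 2)) UNIV"
  note a = corr_has_sum[OF assms, of 1, folded P1_def] corr_has_sum[OF assms, of 2, folded P2_def]
  have "((\<lambda>i. p * (E i * E (i + 1)) - p * (E i * E (i - 1)) + q * (E i * E (i + 2))
          - 2 * q * (E i * E (i + 1)) + 2 * q * (E i * E (i - 1)) - q * (E i * E (i - 2)))
        has_sum (p * P1 - p * P1 + q * P2 - 2 * q * P1 + 2 * q * P1 - q * P2)) UNIV"
    by (intro has_sum_add has_sum_diff' has_sum_cmult_right a)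
  then show ?thesis by (simp add: algebra_simps)
qed

lemma Y_has_sum:
  assumes "L2 E" and u: "\<And>i. \<bar>u i\<bar> \<le> U"
  shows "((\<lambda>i. u i * E i * E (i + 1) - u i * E i * E (i - 1)) has_sum
           infsum (\<lambda>i. (u i - u (i + 1)) * E i * E (i + 1)) UNIV) UNIV"
proof -
  have s1: "(\<lambda>i. u i * E i * E (i + 1)) summable_on UNIV"
    by (rule L2_prod_summable[OF assms(1) L2_shift[OF assms(1)] u])
  have s2: "(\<lambda>i. u (i + 1) * E (i + 1) * E i) summable_on UNIV"
  proof -
    have "(\<lambda>i. u i * E i * E (i - 1)) summable_on UNIV"
      by (rule L2_prod_summable[OF assms(1) L2_shiftm[OF assms(1)] u])
    then have "((\<lambda>i. u i * E i * E (i - 1)) has_sum infsum (\<lambda>i. u i * E i * E (i - 1)) UNIV) UNIV" by simp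
    then have "((\<lambda>j. u (j + 1) * E (j + 1) * E (j + 1 - 1)) has_sum infsum (\<lambda>i. u i * E i * E (i - 1)) UNIV) UNIV"
      using has_sum_shift[of "\<lambda>i. u i * E i * E (i - 1)" 1] by simp
    then show ?thesis by (auto simp: summable_on_def)
  qed
  define S2 where "S2 = infsum (\<lambda>i. u (i + 1) * E (i + 1) * E i) UNIV"
  have h2: "((\<lambda>i. u (i + 1) * E (i + 1) * E i) has_sum S2) UNIV" using s2 S2_def by simp
  have h2': "((\<lambda>i. u i * E i * E (i - 1)) has_sum S2) UNIV"
  proof -
    have "((\<lambda>i. u (i - 1 + 1) * E (i - 1 + 1) * E (i - 1)) has_sum S2) UNIV"
      using has_sum_shiftm[of "\<lambda>i. u (i + 1) * E (i + 1) * E i" 1] h2 by simp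
    then show ?thesis by simp
  qed
  have h1: "((\<lambda>i. u i * E i * E (i + 1)) has_sum infsum (\<lambda>i. u i * E i * E (i + 1)) UNIV) UNIV"
    using s1 by simp
  have d: "((\<lambda>i. u i * E i * E (i + 1) - u (i + 1) * E (i + 1) * E i) has_sum
          (infsum (\<lambda>i. u i * E i * E (i + 1)) UNIV - S2)) UNIV"
    by (rule has_sum_diff'[OF h1 h2])
  have eq: "infsum (\<lambda>i. (u i - u (i + 1)) * E i * E (i + 1)) UNIV = infsum (\<lambda>i. u i * E i * E (i + 1)) UNIV - S2"
    using d by (intro infsumI) (simp add: algebra_simps)
  show ?thesis unfolding eq by (rule has_sum_diff'[OF h1 h2'])
qed

lemma Y_bound:
  assumes "L2 E" and u: "\<And>i. \<bar>u i - u (i + 1)\<bar> \<le> W"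
  shows "\<bar>infsum (\<lambda>i. (u i - u (i + 1)) * E i * E (i + 1)) UNIV\<bar> \<le> W * sq E"
proof -
  have W: "W \<ge> 0" using u[of 0] by linarith
  have s: "(\<lambda>i. (u i - u (i + 1)) * E i * E (i + 1)) summable_on UNIV"
    by (rule L2_prod_summable[OF assms(1) L2_shift[OF assms(1)] u])
  have g: "((\<lambda>i. W / 2 * (E i)\<^sup>2 + W / 2 * (E (i + 1))\<^sup>2) has_sum (W / 2 * sq E + W / 2 * sq E)) UNIV"
    by (intro has_sum_add has_sum_cmult_right L2_has_sum L2_shift_has_sum assms(1))
  have "norm (infsum (\<lambda>i. (u i - u (i + 1)) * E i * E (i + 1)) UNIV) \<le> W / 2 * sq E + W / 2 * sq E"
  proof (rule norm_infsum_le[OF has_sum_infsum[OF s] g])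
    fix i
    have "\<bar>E i * E (i + 1)\<bar> * 2 \<le> (E i)\<^sup>2 + (E (i + 1))\<^sup>2"
    proof -
      have "0 \<le> (\<bar>E i\<bar> - \<bar>E (i + 1)\<bar>)\<^sup>2" by simp
      then show ?thesis by (simp add: power2_eq_square algebra_simps abs_mult)
    qed
    then have "\<bar>u i - u (i + 1)\<bar> * \<bar>E i * E (i + 1)\<bar> \<le> W * (((E i)\<^sup>2 + (E (i + 1))\<^sup>2) / 2)"
      using W u[of i] by (intro mult_mono) auto
    moreover have "norm ((u i - u (i + 1)) * E i * E (i + 1)) = \<bar>u i - u (i + 1)\<bar> * \<bar>E i * E (i + 1)\<bar>"
      by (simp add: abs_mult)
    moreover have "W * (((E i)\<^sup>2 + (E (i + 1))\<^sup>2) / 2) = W / 2 * (E i)\<^sup>2 + W / 2 * (E (i + 1))\<^sup>2"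
      by (simp add: algebra_simps)
    ultimately show "norm ((u i - u (i + 1)) * E i * E (i + 1)) \<le> W / 2 * (E i)\<^sup>2 + W / 2 * (E (i + 1))\<^sup>2"
      by linarith
  qed
  then show ?thesis by simp
qed



lemma four_sq: "(a + b + c + d)\<^sup>2 \<le> 4 * (a\<^sup>2 + b\<^sup>2 + c\<^sup>2 + (d::real)\<^sup>2)"
proof -
  have "0 \<le> (a-b)\<^sup>2 + (a-c)\<^sup>2 + (a-d)\<^sup>2 + (b-c)\<^sup>2 + (b-d)\<^sup>2 + (c-d)\<^sup>2" by simp
  then show ?thesis by (simp add: power2_eq_square algebra_simps)
qed

lemma three_sq: "(a + b + c)\<^sup>2 \<le> 3 * (a\<^sup>2 + b\<^sup>2 + (c::real)\<^sup>2)"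
proof -
  have "0 \<le> (a-b)\<^sup>2 + (a-c)\<^sup>2 + (b-c)\<^sup>2" by simp
  then show ?thesis by (simp add: power2_eq_square algebra_simps)
qed

lemma a_sq_bound:
  fixes p q x1 x2 x3 x4 :: real
  shows "(p * (x1 - x2) + q * (x3 - 2 * x1 + 2 * x2 - x4))\<^sup>2
         \<le> 4 * (\<bar>p\<bar> + 2 * \<bar>q\<bar>)\<^sup>2 * (x3\<^sup>2 + x1\<^sup>2 + x2\<^sup>2 + x4\<^sup>2)"
proof -
  define \<beta> where "\<beta> = \<bar>p\<bar> + 2 * \<bar>q\<bar>"
  have b1: "\<bar>p - 2 * q\<bar> \<le> \<beta>" "\<bar>2 * q - p\<bar> \<le> \<beta>" "\<bar>q\<bar> \<le> \<beta>" unfolding \<beta>_def by auto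
  have eq: "p * (x1 - x2) + q * (x3 - 2 * x1 + 2 * x2 - x4)
            = (p - 2 * q) * x1 + (2 * q - p) * x2 + q * x3 + (- q) * x4" by (simp add: algebra_simps)
  have "\<bar>(p - 2 * q) * x1 + (2 * q - p) * x2 + q * x3 + (- q) * x4\<bar>
        \<le> \<bar>(p - 2 * q) * x1\<bar> + \<bar>(2 * q - p) * x2\<bar> + \<bar>q * x3\<bar> + \<bar>(- q) * x4\<bar>" by linarith
  also have "\<dots> = \<bar>p - 2 * q\<bar> * \<bar>x1\<bar> + \<bar>2 * q - p\<bar> * \<bar>x2\<bar> + \<bar>q\<bar> * \<bar>x3\<bar> + \<bar>q\<bar> * \<bar>x4\<bar>"
    by (simp add: abs_mult)
  also have "\<dots> \<le> \<beta> * \<bar>x1\<bar> + \<beta> * \<bar>x2\<bar> + \<beta> * \<bar>x3\<bar> + \<beta> * \<bar>x4\<bar>"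
    using b1 by (intro add_mono mult_right_mono) auto
  also have "\<dots> = \<beta> * (\<bar>x3\<bar> + \<bar>x1\<bar> + \<bar>x2\<bar> + \<bar>x4\<bar>)" by (simp add: algebra_simps)
  finally have ab: "\<bar>p * (x1 - x2) + q * (x3 - 2 * x1 + 2 * x2 - x4)\<bar> \<le> \<beta> * (\<bar>x3\<bar> + \<bar>x1\<bar> + \<bar>x2\<bar> + \<bar>x4\<bar>)"
    unfolding eq .
  have "(p * (x1 - x2) + q * (x3 - 2 * x1 + 2 * x2 - x4))\<^sup>2
        = \<bar>p * (x1 - x2) + q * (x3 - 2 * x1 + 2 * x2 - x4)\<bar>\<^sup>2" by simp
  also have "\<dots> \<le> (\<beta> * (\<bar>x3\<bar> + \<bar>x1\<bar> + \<bar>x2\<bar> + \<bar>x4\<bar>))\<^sup>2"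
    by (rule power_mono[OF ab]) simp
  also have "\<dots> = \<beta>\<^sup>2 * (\<bar>x3\<bar> + \<bar>x1\<bar> + \<bar>x2\<bar> + \<bar>x4\<bar>)\<^sup>2" by (simp add: power_mult_distrib)
  also have "\<dots> \<le> \<beta>\<^sup>2 * (4 * (\<bar>x3\<bar>\<^sup>2 + \<bar>x1\<bar>\<^sup>2 + \<bar>x2\<bar>\<^sup>2 + \<bar>x4\<bar>\<^sup>2))"
    by (intro mult_left_mono four_sq) simp
  finally show ?thesis unfolding \<beta>_def by (simp add: algebra_simps)
qed

lemma lin3: "(z::real) \<le> 2*x + 2*y \<Longrightarrow> x \<le> P \<Longrightarrow> y \<le> Q/2 \<Longrightarrow> z \<le> 2*P + Q" by linarith
lemma lin4: assumes "(s::real) \<le> 3*(a+b+c)" "b \<le> B1 + B2" "a \<le> A" shows "s \<le> 3*(A + B1 + B2 + c)"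
  using assms by simp
lemma lin5:
  fixes L e X1 t p w X4 m Y Y2 Z1 Z2 Z3 :: real
  assumes "L = e - X1 - 2*t*p - 2*t*w + X4" "2*t*p = m*Y + Y2" "(-m)*Y \<le> Z1" "t*(-2*w) \<le> Z2" "X4 \<le> Z3"
  shows "L \<le> e - X1 + Z1 - Y2 + Z2 + Z3"
proof -
  have "(-m)*Y = -(m*Y)" "t*(-2*w) = -(2*t*w)" by simp_all
  then show ?thesis using assms by linarith
qed

lemma mult3: "(t::real) * (3 * x) = 3 * t * x" by simp

lemma pt_ineq:
  fixes e0 ep em a r dv u \<tau> g h C U A2 :: real
  assumes "\<tau> > 0" "h > 0" "\<bar>dv\<bar> \<le> C" "\<bar>u\<bar> \<le> U" "a\<^sup>2 \<le> A2"
  shows "(e0 - \<tau> * (a + (g * dv * e0 + g / (2 * h) * u * (ep - em)) + r))\<^sup>2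
    \<le> e0\<^sup>2 - 2 * \<tau> * (e0 * a) + \<bar>g\<bar> * C * (2 * \<tau> * e0\<^sup>2)
       - \<tau> * (g / h) * (u * e0 * ep - u * e0 * em) + \<tau> * (e0\<^sup>2 + r\<^sup>2)
       + 3 * \<tau>\<^sup>2 * (A2 + 2 * (g\<^sup>2 * C\<^sup>2 * e0\<^sup>2) + (g\<^sup>2 * U\<^sup>2 / h\<^sup>2) * (ep\<^sup>2 + em\<^sup>2) + r\<^sup>2)"
proof -
  define bb where "bb = g * dv * e0 + g / (2 * h) * u * (ep - em)"
  have C: "C \<ge> 0" "U \<ge> 0" using assms by auto
  have 1: "(e0 - \<tau> * (a + bb + r))\<^sup>2 = e0\<^sup>2 - 2 * \<tau> * (e0 * a) - 2 * \<tau> * (e0 * bb) - 2 * \<tau> * (e0 * r)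
             + \<tau>\<^sup>2 * (a + bb + r)\<^sup>2"
    by (simp add: power2_eq_square algebra_simps)
  have 2: "2 * \<tau> * (e0 * bb) = (g * dv) * (2 * \<tau> * e0\<^sup>2) + \<tau> * (g / h) * (u * e0 * ep - u * e0 * em)"
    unfolding bb_def using assms(2) by (simp add: field_simps power2_eq_square)
  have "- (g * dv) \<le> \<bar>g\<bar> * C"
  proof -
    have "\<bar>g * dv\<bar> \<le> \<bar>g\<bar> * C" unfolding abs_mult using assms(3) by (intro mult_left_mono) auto
    then show ?thesis using abs_ge_minus_self[of "g * dv"] by linarith
  qed
  then have 3: "(- (g * dv)) * (2 * \<tau> * e0\<^sup>2) \<le> \<bar>g\<bar> * C * (2 * \<tau> * e0\<^sup>2)"
    by (rule mult_right_mono) (use assms(1) in simp)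
  have "- 2 * (e0 * r) \<le> e0\<^sup>2 + r\<^sup>2"
  proof -
    have "0 \<le> (e0 + r)\<^sup>2" by simp
    then show ?thesis by (simp add: power2_eq_square algebra_simps)
  qed
  then have 4: "\<tau> * (- 2 * (e0 * r)) \<le> \<tau> * (e0\<^sup>2 + r\<^sup>2)"
    by (rule mult_left_mono) (use assms(1) in simp)
  have 5: "(a + bb + r)\<^sup>2 \<le> 3 * (a\<^sup>2 + bb\<^sup>2 + r\<^sup>2)" by (rule three_sq)
  have b1: "(g * dv * e0)\<^sup>2 \<le> g\<^sup>2 * C\<^sup>2 * e0\<^sup>2"
  proof -
    have "\<bar>dv\<bar>\<^sup>2 \<le> C\<^sup>2" by (rule power_mono[OF assms(3)]) simp
    then have "dv\<^sup>2 \<le> C\<^sup>2" by simp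
    then have "g\<^sup>2 * dv\<^sup>2 * e0\<^sup>2 \<le> g\<^sup>2 * C\<^sup>2 * e0\<^sup>2"
      by (intro mult_right_mono mult_left_mono) auto
    then show ?thesis by (simp add: power_mult_distrib)
  qed
  have b2: "(g / (2 * h) * u * (ep - em))\<^sup>2 \<le> (g\<^sup>2 * U\<^sup>2 / h\<^sup>2) * (ep\<^sup>2 + em\<^sup>2) / 2"
  proof -
    have "\<bar>u\<bar>\<^sup>2 \<le> U\<^sup>2" by (rule power_mono[OF assms(4)]) simp
    then have u2: "u\<^sup>2 \<le> U\<^sup>2" by simp
    have d2: "(ep - em)\<^sup>2 \<le> 2 * (ep\<^sup>2 + em\<^sup>2)" using sq_sum_le[of ep "- em"] by simp
    have "(g / (2 * h) * u * (ep - em))\<^sup>2 = (g\<^sup>2 / (4 * h\<^sup>2)) * (u\<^sup>2 * (ep - em)\<^sup>2)"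
      by (simp add: power_mult_distrib power_divide)
    also have "\<dots> \<le> (g\<^sup>2 / (4 * h\<^sup>2)) * (U\<^sup>2 * (2 * (ep\<^sup>2 + em\<^sup>2)))"
      using u2 d2 by (intro mult_left_mono mult_mono; simp)
    also have "\<dots> = (g\<^sup>2 * U\<^sup>2 / h\<^sup>2) * (ep\<^sup>2 + em\<^sup>2) / 2" using assms(2) by (simp add: field_simps)
    finally show ?thesis .
  qed
  have 6: "bb\<^sup>2 \<le> 2 * (g\<^sup>2 * C\<^sup>2 * e0\<^sup>2) + (g\<^sup>2 * U\<^sup>2 / h\<^sup>2) * (ep\<^sup>2 + em\<^sup>2)"
    unfolding bb_def by (rule lin3[OF sq_sum_le b1 b2])
  have 7: "(a + bb + r)\<^sup>2 \<le> 3 * (A2 + 2 * (g\<^sup>2 * C\<^sup>2 * e0\<^sup>2) + (g\<^sup>2 * U\<^sup>2 / h\<^sup>2) * (ep\<^sup>2 + em\<^sup>2) + r\<^sup>2)"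
    by (rule lin4[OF 5 6 assms(5)])
  have 8: "\<tau>\<^sup>2 * (a + bb + r)\<^sup>2 \<le> \<tau>\<^sup>2 * (3 * (A2 + 2 * (g\<^sup>2 * C\<^sup>2 * e0\<^sup>2) + (g\<^sup>2 * U\<^sup>2 / h\<^sup>2) * (ep\<^sup>2 + em\<^sup>2) + r\<^sup>2))"
    by (rule mult_left_mono[OF 7]) simp
  then have 9: "\<tau>\<^sup>2 * (a + bb + r)\<^sup>2 \<le> 3 * \<tau>\<^sup>2 * (A2 + 2 * (g\<^sup>2 * C\<^sup>2 * e0\<^sup>2) + (g\<^sup>2 * U\<^sup>2 / h\<^sup>2) * (ep\<^sup>2 + em\<^sup>2) + r\<^sup>2)"
    using 8 by (simp only: mult3)
  show ?thesis unfolding bb_def[symmetric] by (rule lin5[OF 1 2 3 4 9])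
qed



lemma energy_step:
  fixes E r Dv u E' :: "int \<Rightarrow> real" and c e g h \<tau> K C U V Ee :: real
  assumes E: "L2 E" and R: "L2 r" and h: "0 < h" "h \<le> 1" and tau: "0 < \<tau>" "\<tau> \<le> K * h ^ 6"
    and Dv: "\<And>i. \<bar>Dv i\<bar> \<le> C" and u: "\<And>i. \<bar>u i\<bar> \<le> U" and uV: "\<And>i. \<bar>u i - u (i + 1)\<bar> \<le> V * h"
    and e: "\<bar>e\<bar> \<le> Ee"
    and E': "\<And>i. E' i = E i - \<tau> * ((c / (2 * h) * (E (i+1) - E (i-1)) + e / (2 * h ^ 3) * (E (i+2) - 2 * E (i+1) + 2 * E (i-1) - E (i-2)))
                 + (g * Dv i * E i + g / (2 * h) * u i * (E (i+1) - E (i-1))) + r i)"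
  shows "L2 E'"
    and "sq E' \<le> (1 + \<tau> * (2 * \<bar>g\<bar> * C + \<bar>g\<bar> * V + 1 + 48 * K * (\<bar>c\<bar> + Ee)\<^sup>2 + 6 * g\<^sup>2 * C\<^sup>2 * K + 6 * g\<^sup>2 * U\<^sup>2 * K)) * sq E
                 + \<tau> * (1 + 3 * K) * sq r"
proof -
  define \<beta> where "\<beta> = \<bar>c / (2 * h)\<bar> + 2 * \<bar>e / (2 * h ^ 3)\<bar>"
  define a where "a = (\<lambda>i. c / (2 * h) * (E (i+1) - E (i-1)) + e / (2 * h ^ 3) * (E (i+2) - 2 * E (i+1) + 2 * E (i-1) - E (i-2)))"
  define A2 where "A2 = (\<lambda>i. 4 * \<beta>\<^sup>2 * ((E (i+2))\<^sup>2 + (E (i+1))\<^sup>2 + (E (i-1))\<^sup>2 + (E (i-2))\<^sup>2))"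
  define Y where "Y = infsum (\<lambda>i. (u i - u (i + 1)) * E i * E (i + 1)) UNIV"
  define T where "T = (\<lambda>i. (E i)\<^sup>2 - 2 * \<tau> * (E i * a i) + \<bar>g\<bar> * C * (2 * \<tau> * (E i)\<^sup>2)
       - \<tau> * (g / h) * (u i * E i * E (i+1) - u i * E i * E (i-1)) + \<tau> * ((E i)\<^sup>2 + (r i)\<^sup>2)
       + 3 * \<tau>\<^sup>2 * (A2 i + 2 * (g\<^sup>2 * C\<^sup>2 * (E i)\<^sup>2) + (g\<^sup>2 * U\<^sup>2 / h\<^sup>2) * ((E (i+1))\<^sup>2 + (E (i-1))\<^sup>2) + (r i)\<^sup>2))"
  define s where "s = sq E"
  define \<rho> where "\<rho> = sq r"
  define Tv where "Tv = s - 2 * \<tau> * 0 + \<bar>g\<bar> * C * (2 * \<tau> * s) - \<tau> * (g / h) * Y + \<tau> * (s + \<rho>)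
       + 3 * \<tau>\<^sup>2 * (4 * \<beta>\<^sup>2 * (s + s + s + s) + 2 * (g\<^sup>2 * C\<^sup>2 * s) + (g\<^sup>2 * U\<^sup>2 / h\<^sup>2) * (s + s) + \<rho>)"
  have pt: "(E' i)\<^sup>2 \<le> T i" for i
  proof -
    have "(E' i)\<^sup>2 = (E i - \<tau> * (a i + (g * Dv i * E i + g / (2 * h) * u i * (E (i+1) - E (i-1))) + r i))\<^sup>2"
      unfolding E' a_def by simp
    also have "\<dots> \<le> T i"
      unfolding T_def
      by (rule pt_ineq[OF tau(1) h(1) Dv u]) (unfold a_def A2_def \<beta>_def, rule a_sq_bound)
    finally show ?thesis .
  qed
  have hE: "((\<lambda>i. (E i)\<^sup>2) has_sum s) UNIV" unfolding s_def by (rule L2_has_sum[OF E])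
  have hEp: "((\<lambda>i. (E (i + k))\<^sup>2) has_sum s) UNIV" for k unfolding s_def by (rule L2_shift_has_sum[OF E])
  have hEm: "((\<lambda>i. (E (i - k))\<^sup>2) has_sum s) UNIV" for k unfolding s_def by (rule L2_shiftm_has_sum[OF E])
  have hr: "((\<lambda>i. (r i)\<^sup>2) has_sum \<rho>) UNIV" unfolding \<rho>_def by (rule L2_has_sum[OF R])
  have hskew: "((\<lambda>i. E i * a i) has_sum 0) UNIV" unfolding a_def by (rule skew_has_sum[OF E])
  have hY: "((\<lambda>i. u i * E i * E (i+1) - u i * E i * E (i-1)) has_sum Y) UNIV"
    unfolding Y_def by (rule Y_has_sum[OF E u])
  have hA2: "(A2 has_sum (4 * \<beta>\<^sup>2 * (s + s + s + s))) UNIV"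
    unfolding A2_def by (intro has_sum_add has_sum_cmult_right hEp hEm)
  have hT: "(T has_sum Tv) UNIV"
    unfolding T_def Tv_def
    by (intro has_sum_add has_sum_diff' has_sum_cmult_right hE hEp hEm hr hskew hY hA2)
  show L2': "L2 E'" unfolding L2_def
    by (rule summable_cmp[of T]) (use hT pt in \<open>auto simp: summable_on_def\<close>)
  have le1: "sq E' \<le> Tv"
    by (rule has_sum_mono[OF L2_has_sum[OF L2'] hT]) (rule pt)
  have s0: "s \<ge> 0" "\<rho> \<ge> 0" unfolding s_def \<rho>_def by (simp_all add: sq_nonneg)
  have K0: "K \<ge> 0" using tau h by (smt (verit) zero_less_power mult_nonpos_nonneg)
  have h6: "h ^ 6 \<le> 1" using h by (simp add: power_le_one)
  have k2: "\<tau> \<le> K" using tau h6 K0 by (smt (verit) mult_left_le)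
  have k3: "\<tau> / h\<^sup>2 \<le> K"
  proof -
    have "h ^ 6 \<le> h\<^sup>2" using h by (simp add: power_decreasing)
    then have "\<tau> \<le> K * h\<^sup>2" using tau K0 by (smt (verit) mult_left_mono)
    then show ?thesis using h by (simp add: divide_le_eq)
  qed
  have k1: "\<tau> * \<beta>\<^sup>2 \<le> K * (\<bar>c\<bar> + Ee)\<^sup>2"
  proof -
    have "\<bar>c / (2 * h)\<bar> \<le> \<bar>c\<bar> / (2 * h ^ 3)"
    proof -
      have "h ^ 3 \<le> h" using h by (simp add: power_le_one power_decreasing[of 1 3 h, simplified])
      then have "2 * h ^ 3 \<le> 2 * h" by simp
      then show ?thesis using h by (simp add: abs_divide divide_left_mono)
    qed
    then have "\<beta> \<le> \<bar>c\<bar> / (2 * h ^ 3) + \<bar>e\<bar> / h ^ 3" unfolding \<beta>_def using h by (simp add: abs_divide)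
    also have "\<dots> \<le> \<bar>c\<bar> / h ^ 3 + Ee / h ^ 3"
    proof -
      have x1: "\<bar>c\<bar> / (2 * h ^ 3) \<le> \<bar>c\<bar> / h ^ 3" using h by (intro divide_left_mono) auto
      have x2: "\<bar>e\<bar> / h ^ 3 \<le> Ee / h ^ 3" using h e by (intro divide_right_mono) auto
      show ?thesis using x1 x2 by linarith
    qed
    also have "\<dots> = (\<bar>c\<bar> + Ee) / h ^ 3" by (simp add: add_divide_distrib)
    finally have b: "\<beta> \<le> (\<bar>c\<bar> + Ee) / h ^ 3" .
    have b0: "0 \<le> \<beta>" unfolding \<beta>_def by simp
    have "\<beta>\<^sup>2 \<le> ((\<bar>c\<bar> + Ee) / h ^ 3)\<^sup>2" by (rule power_mono[OF b b0])
    also have "\<dots> = (\<bar>c\<bar> + Ee)\<^sup>2 / h ^ 6" by (simp add: power_divide power_mult[symmetric])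
    finally have "\<tau> * \<beta>\<^sup>2 \<le> \<tau> * ((\<bar>c\<bar> + Ee)\<^sup>2 / h ^ 6)" using tau by (intro mult_left_mono) auto
    also have "\<dots> \<le> K * h ^ 6 * ((\<bar>c\<bar> + Ee)\<^sup>2 / h ^ 6)" using tau by (intro mult_right_mono) auto
    also have "\<dots> = K * (\<bar>c\<bar> + Ee)\<^sup>2" using h by simp
    finally show ?thesis .
  qed
  have Yb: "- (\<tau> * (g / h) * Y) \<le> \<tau> * (\<bar>g\<bar> * V * s)"
  proof -
    have "\<bar>Y\<bar> \<le> V * h * s" unfolding Y_def s_def by (rule Y_bound[of E u "V * h", OF E uV])
    then have "\<bar>g\<bar> / h * \<bar>Y\<bar> \<le> \<bar>g\<bar> / h * (V * h * s)" using h by (intro mult_left_mono) auto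
    also have "\<dots> = \<bar>g\<bar> * V * s" using h by simp
    finally have "\<bar>g / h * Y\<bar> \<le> \<bar>g\<bar> * V * s" using h by (simp add: abs_mult abs_divide)
    then have "- (g / h * Y) \<le> \<bar>g\<bar> * V * s" by linarith
    then have "\<tau> * (- (g / h * Y)) \<le> \<tau> * (\<bar>g\<bar> * V * s)" using tau by (intro mult_left_mono) auto
    then show ?thesis by (simp add: algebra_simps)
  qed
  have eqT: "Tv = s + \<tau> * (\<bar>g\<bar> * C * 2 * s) - \<tau> * (g / h) * Y + \<tau> * s + \<tau> * \<rho>
      + \<tau> * (48 * (\<tau> * \<beta>\<^sup>2) * s + 6 * \<tau> * (g\<^sup>2 * C\<^sup>2 * s) + 6 * (\<tau> / h\<^sup>2) * (g\<^sup>2 * U\<^sup>2 * s) + 3 * \<tau> * \<rho>)"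
    unfolding Tv_def using h by (simp add: field_simps power2_eq_square)
  have inner: "48 * (\<tau> * \<beta>\<^sup>2) * s + 6 * \<tau> * (g\<^sup>2 * C\<^sup>2 * s) + 6 * (\<tau> / h\<^sup>2) * (g\<^sup>2 * U\<^sup>2 * s) + 3 * \<tau> * \<rho>
      \<le> 48 * (K * (\<bar>c\<bar> + Ee)\<^sup>2) * s + 6 * K * (g\<^sup>2 * C\<^sup>2 * s) + 6 * K * (g\<^sup>2 * U\<^sup>2 * s) + 3 * K * \<rho>"
  proof -
    have "48 * (\<tau> * \<beta>\<^sup>2) * s \<le> 48 * (K * (\<bar>c\<bar> + Ee)\<^sup>2) * s" using k1 s0 by (intro mult_right_mono) auto
    moreover have "6 * \<tau> * (g\<^sup>2 * C\<^sup>2 * s) \<le> 6 * K * (g\<^sup>2 * C\<^sup>2 * s)" using k2 s0 by (intro mult_right_mono) auto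
    moreover have "6 * (\<tau> / h\<^sup>2) * (g\<^sup>2 * U\<^sup>2 * s) \<le> 6 * K * (g\<^sup>2 * U\<^sup>2 * s)" using k3 s0 by (intro mult_right_mono) auto
    moreover have "3 * \<tau> * \<rho> \<le> 3 * K * \<rho>" using k2 s0 by (intro mult_right_mono) auto
    ultimately show ?thesis by linarith
  qed
  have "Tv \<le> s + \<tau> * (\<bar>g\<bar> * C * 2 * s) + \<tau> * (\<bar>g\<bar> * V * s) + \<tau> * s + \<tau> * \<rho>
      + \<tau> * (48 * (K * (\<bar>c\<bar> + Ee)\<^sup>2) * s + 6 * K * (g\<^sup>2 * C\<^sup>2 * s) + 6 * K * (g\<^sup>2 * U\<^sup>2 * s) + 3 * K * \<rho>)"
  proof -
    have "\<tau> * (48 * (\<tau> * \<beta>\<^sup>2) * s + 6 * \<tau> * (g\<^sup>2 * C\<^sup>2 * s) + 6 * (\<tau> / h\<^sup>2) * (g\<^sup>2 * U\<^sup>2 * s) + 3 * \<tau> * \<rho>)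
      \<le> \<tau> * (48 * (K * (\<bar>c\<bar> + Ee)\<^sup>2) * s + 6 * K * (g\<^sup>2 * C\<^sup>2 * s) + 6 * K * (g\<^sup>2 * U\<^sup>2 * s) + 3 * K * \<rho>)"
      using tau by (intro mult_left_mono[OF inner]) auto
    then show ?thesis unfolding eqT using Yb by linarith
  qed
  also have "\<dots> = (1 + \<tau> * (2 * \<bar>g\<bar> * C + \<bar>g\<bar> * V + 1 + 48 * K * (\<bar>c\<bar> + Ee)\<^sup>2 + 6 * g\<^sup>2 * C\<^sup>2 * K + 6 * g\<^sup>2 * U\<^sup>2 * K)) * s
                 + \<tau> * (1 + 3 * K) * \<rho>"
    by (simp add: algebra_simps)
  finally show "sq E' \<le> (1 + \<tau> * (2 * \<bar>g\<bar> * C + \<bar>g\<bar> * V + 1 + 48 * K * (\<bar>c\<bar> + Ee)\<^sup>2 + 6 * g\<^sup>2 * C\<^sup>2 * K + 6 * g\<^sup>2 * U\<^sup>2 * K)) * sq E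
                 + \<tau> * (1 + 3 * K) * sq r"
    using le1 unfolding s_def \<rho>_def by linarith
qed



lemma taylor_shift:
  fixes f :: "real \<Rightarrow> real"
  assumes sm: "\<And>m x. (deriv ^^ m) f differentiable (at x)"
  shows "\<exists>\<xi>. \<bar>\<xi> - x\<bar> \<le> \<bar>y\<bar> \<and> f (x + y) = (\<Sum>m<n. (deriv ^^ m) f x / fact m * y ^ m) + (deriv ^^ n) f \<xi> / fact n * y ^ n"
proof -
  define diff where "diff m z = (deriv ^^ m) f (z + x)" for m z
  have d0: "diff 0 = (\<lambda>z. f (z + x))" by (simp add: diff_def fun_eq_iff)
  have D: "\<forall>m z. DERIV (diff m) z :> diff (Suc m) z"
  proof (intro allI)
    fix m z
    have "DERIV ((deriv ^^ m) f) (z + x) :> deriv ((deriv ^^ m) f) (z + x)"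
      using sm DERIV_deriv_iff_real_differentiable by blast
    then have "((\<lambda>z. (deriv ^^ m) f (z + x)) has_field_derivative deriv ((deriv ^^ m) f) (z + x)) (at z)"
      using DERIV_shift by blast
    then show "DERIV (diff m) z :> diff (Suc m) z" unfolding diff_def by simp
  qed
  from Maclaurin_all_le[OF d0 D, of y n] obtain t where
    t: "\<bar>t\<bar> \<le> \<bar>y\<bar>" "f (y + x) = (\<Sum>m<n. diff m 0 / fact m * y ^ m) + diff n t / fact n * y ^ n"
    by blast
  show ?thesis
    by (rule exI[of _ "t + x"]) (use t in \<open>simp add: diff_def add.commute\<close>)
qed

lemma lin9: fixes a b c :: real assumes "a \<le> 2*b + 2*c" "c \<le> 4" "0 \<le> b" shows "1 + a \<le> 9*(1+b)"
  using assms by (smt (verit))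

lemma wcmp:
  fixes C x \<xi> :: real
  assumes "\<bar>\<xi> - x\<bar> \<le> 2" "C \<ge> 0"
  shows "C / (1 + \<xi>\<^sup>2) \<le> 9 * C / (1 + x\<^sup>2)"
proof -
  define d where "d = x - \<xi>"
  have d2: "d\<^sup>2 \<le> 4"
  proof -
    have "\<bar>d\<bar>\<^sup>2 \<le> 2\<^sup>2" using assms(1) unfolding d_def by (intro power_mono) auto
    then show ?thesis by simp
  qed
  have "x\<^sup>2 \<le> 2 * \<xi>\<^sup>2 + 2 * d\<^sup>2" using sq_sum_le[of \<xi> d] unfolding d_def by simp
  then have le: "1 + x\<^sup>2 \<le> 9 * (1 + \<xi>\<^sup>2)" using d2 zero_le_power2[of \<xi>] lin9 by blast
  have "C / (1 + \<xi>\<^sup>2) = 9 * C / (9 * (1 + \<xi>\<^sup>2))" by (rule mult_divide_mult_cancel_left[symmetric]) simp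
  also have "\<dots> \<le> 9 * C / (1 + x\<^sup>2)"
    by (rule divide_left_mono[OF le]) (use assms(2) in \<open>auto intro!: mult_pos_pos add_pos_nonneg\<close>)
  finally show ?thesis .
qed

lemma central1:
  fixes f :: "real \<Rightarrow> real" and C h x :: real
  assumes sm: "\<And>m x. (deriv ^^ m) f differentiable (at x)"
    and b: "\<And>z. \<bar>(deriv ^^ 3) f z\<bar> \<le> C / (1 + z\<^sup>2)" and h: "0 < h" "h \<le> 1"
  shows "\<bar>(f (x + h) - f (x - h)) / (2 * h) - (deriv ^^ 1) f x\<bar> \<le> 9 * C / (1 + x\<^sup>2) * h\<^sup>2"
proof -
  let ?D = "\<lambda>m. (deriv ^^ m) f"
  have C0: "C \<ge> 0" using b[of 0] by simp
  obtain \<xi>1 where x1: "\<bar>\<xi>1 - x\<bar> \<le> \<bar>h\<bar>" "f (x + h) = (\<Sum>m<3. ?D m x / fact m * h ^ m) + ?D 3 \<xi>1 / fact 3 * h ^ 3"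
    using taylor_shift[OF sm] by blast
  obtain \<xi>2 where x2: "\<bar>\<xi>2 - x\<bar> \<le> \<bar>-h\<bar>" "f (x + - h) = (\<Sum>m<3. ?D m x / fact m * (-h) ^ m) + ?D 3 \<xi>2 / fact 3 * (-h) ^ 3"
    using taylor_shift[OF sm] by blast
  define B where "B = 9 * C / (1 + x\<^sup>2)"
  have B1: "\<bar>?D 3 \<xi>1\<bar> \<le> B" unfolding B_def
    using b[of \<xi>1] wcmp[of \<xi>1 x C] x1(1) h C0 by auto
  have B2: "\<bar>?D 3 \<xi>2\<bar> \<le> B" unfolding B_def
    using b[of \<xi>2] wcmp[of \<xi>2 x C] x2(1) h C0 by auto
  have eq: "(f (x + h) - f (x - h)) / (2 * h) - ?D 1 x = (?D 3 \<xi>1 + ?D 3 \<xi>2) * h\<^sup>2 / 12"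
    using x1(2) x2(2) h by (simp add: eval_nat_numeral field_simps)
  have "\<bar>(?D 3 \<xi>1 + ?D 3 \<xi>2) * h\<^sup>2 / 12\<bar> = \<bar>?D 3 \<xi>1 + ?D 3 \<xi>2\<bar> * h\<^sup>2 / 12" by (simp add: abs_mult)
  also have "\<dots> \<le> (2 * B) * h\<^sup>2 / 12" using B1 B2 by (intro divide_right_mono mult_right_mono) auto
  also have "\<dots> \<le> B * h\<^sup>2" using B1 by simp
  finally show ?thesis unfolding eq B_def .
qed

lemma central3:
  fixes f :: "real \<Rightarrow> real" and C h x :: real
  assumes sm: "\<And>m x. (deriv ^^ m) f differentiable (at x)"
    and b: "\<And>z. \<bar>(deriv ^^ 5) f z\<bar> \<le> C / (1 + z\<^sup>2)" and h: "0 < h" "h \<le> 1"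
  shows "\<bar>(f (x + 2 * h) - 2 * f (x + h) + 2 * f (x - h) - f (x - 2 * h)) / (2 * h ^ 3) - (deriv ^^ 3) f x\<bar>
           \<le> 9 * C / (1 + x\<^sup>2) * h\<^sup>2"
proof -
  let ?D = "\<lambda>m. (deriv ^^ m) f"
  have C0: "C \<ge> 0" using b[of 0] by simp
  obtain \<xi>1 where x1: "\<bar>\<xi>1 - x\<bar> \<le> \<bar>2 * h\<bar>" "f (x + 2 * h) = (\<Sum>m<5. ?D m x / fact m * (2 * h) ^ m) + ?D 5 \<xi>1 / fact 5 * (2 * h) ^ 5"
    using taylor_shift[OF sm] by blast
  obtain \<xi>2 where x2: "\<bar>\<xi>2 - x\<bar> \<le> \<bar>h\<bar>" "f (x + h) = (\<Sum>m<5. ?D m x / fact m * h ^ m) + ?D 5 \<xi>2 / fact 5 * h ^ 5"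
    using taylor_shift[OF sm] by blast
  obtain \<xi>3 where x3: "\<bar>\<xi>3 - x\<bar> \<le> \<bar>-h\<bar>" "f (x + - h) = (\<Sum>m<5. ?D m x / fact m * (-h) ^ m) + ?D 5 \<xi>3 / fact 5 * (-h) ^ 5"
    using taylor_shift[OF sm] by blast
  obtain \<xi>4 where x4: "\<bar>\<xi>4 - x\<bar> \<le> \<bar>-(2 * h)\<bar>" "f (x + - (2 * h)) = (\<Sum>m<5. ?D m x / fact m * (-(2 * h)) ^ m) + ?D 5 \<xi>4 / fact 5 * (-(2 * h)) ^ 5"
    using taylor_shift[OF sm] by blast
  define B where "B = 9 * C / (1 + x\<^sup>2)"
  have B1: "\<bar>?D 5 \<xi>1\<bar> \<le> B" unfolding B_def using b[of \<xi>1] wcmp[of \<xi>1 x C] x1(1) h C0 by auto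
  have B2: "\<bar>?D 5 \<xi>2\<bar> \<le> B" unfolding B_def using b[of \<xi>2] wcmp[of \<xi>2 x C] x2(1) h C0 by auto
  have B3: "\<bar>?D 5 \<xi>3\<bar> \<le> B" unfolding B_def using b[of \<xi>3] wcmp[of \<xi>3 x C] x3(1) h C0 by auto
  have B4: "\<bar>?D 5 \<xi>4\<bar> \<le> B" unfolding B_def using b[of \<xi>4] wcmp[of \<xi>4 x C] x4(1) h C0 by auto
  have eq: "(f (x + 2 * h) - 2 * f (x + h) + 2 * f (x - h) - f (x - 2 * h)) / (2 * h ^ 3) - ?D 3 x
      = (32 * ?D 5 \<xi>1 - 2 * ?D 5 \<xi>2 - 2 * ?D 5 \<xi>3 + 32 * ?D 5 \<xi>4) * h\<^sup>2 / 240"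
    using x1(2) x2(2) x3(2) x4(2) h by (simp add: eval_nat_numeral field_simps)
  have "\<bar>32 * ?D 5 \<xi>1 - 2 * ?D 5 \<xi>2 - 2 * ?D 5 \<xi>3 + 32 * ?D 5 \<xi>4\<bar> \<le> 68 * B"
    using B1 B2 B3 B4 by (simp add: abs_le_iff)
  then have "\<bar>32 * ?D 5 \<xi>1 - 2 * ?D 5 \<xi>2 - 2 * ?D 5 \<xi>3 + 32 * ?D 5 \<xi>4\<bar> * h\<^sup>2 / 240 \<le> (68 * B) * h\<^sup>2 / 240"
    by (intro divide_right_mono mult_right_mono) auto
  then have "\<bar>(32 * ?D 5 \<xi>1 - 2 * ?D 5 \<xi>2 - 2 * ?D 5 \<xi>3 + 32 * ?D 5 \<xi>4) * h\<^sup>2 / 240\<bar> \<le> (68 * B) * h\<^sup>2 / 240"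
    by (simp add: abs_mult)
  also have "\<dots> \<le> B * h\<^sup>2" using B1 by simp
  finally show ?thesis unfolding eq B_def .
qed

lemma lip1:
  fixes f :: "real \<Rightarrow> real" and C :: real
  assumes sm: "\<And>m x. (deriv ^^ m) f differentiable (at x)"
    and b: "\<And>z. \<bar>(deriv ^^ 1) f z\<bar> \<le> C"
  shows "\<bar>f (x + y) - f x\<bar> \<le> C * \<bar>y\<bar>"
proof -
  obtain \<xi> where "f (x + y) = (\<Sum>m<1. (deriv ^^ m) f x / fact m * y ^ m) + (deriv ^^ 1) f \<xi> / fact 1 * y ^ 1"
    using taylor_shift[OF sm] by blast
  then have "f (x + y) - f x = (deriv ^^ 1) f \<xi> * y" by simp
  then show ?thesis using b[of \<xi>] by (simp add: abs_mult mult_right_mono)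
qed



lemma time_est:
  fixes F Ft Ftt :: "real \<Rightarrow> real" and t0 t \<tau> Cw :: real
  assumes dF: "\<And>s. s \<in> {0..t0} \<Longrightarrow> (F has_real_derivative Ft s) (at s within {0..t0})"
    and dFt: "\<And>s. s \<in> {0..t0} \<Longrightarrow> (Ft has_real_derivative Ftt s) (at s within {0..t0})"
    and b: "\<And>s. s \<in> {0..t0} \<Longrightarrow> \<bar>Ftt s\<bar> \<le> Cw"
    and t: "0 \<le> t" "0 < \<tau>" "t + \<tau> \<le> t0"
  shows "\<bar>F (t + \<tau>) - F t - \<tau> * Ft t\<bar> \<le> Cw * \<tau>\<^sup>2"
proof -
  define S where "S = {t..t + \<tau>}"
  have sub: "S \<subseteq> {0..t0}" unfolding S_def using t by auto
  have tS: "t \<in> S" "t + \<tau> \<in> S" unfolding S_def using t by auto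
  have a: "\<bar>Ft s - Ft t\<bar> \<le> Cw * \<tau>" if s: "s \<in> S" for s
  proof -
    have "norm (Ft s - Ft t) \<le> Cw * norm (s - t)"
    proof (rule field_differentiable_bound[where f' = Ftt])
      show "convex S" unfolding S_def by simp
      show "(Ft has_field_derivative Ftt z) (at z within S)" if "z \<in> S" for z
        using has_field_derivative_subset[OF dFt sub] that sub by blast
      show "norm (Ftt z) \<le> Cw" if "z \<in> S" for z using b that sub by auto
    qed (use s tS in auto)
    also have "\<dots> \<le> Cw * \<tau>"
    proof -
      have "Cw \<ge> 0" using b[of t] tS sub by force
      moreover have "norm (s - t) \<le> \<tau>" using s unfolding S_def by auto
      ultimately show ?thesis by (intro mult_left_mono) auto
    qed
    finally show ?thesis by simp
  qed
  have "norm ((\<lambda>s. F s - s * Ft t) (t + \<tau>) - (\<lambda>s. F s - s * Ft t) t) \<le> (Cw * \<tau>) * norm ((t + \<tau>) - t)"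
  proof (rule field_differentiable_bound[where f' = "\<lambda>s. Ft s - Ft t"])
    show "convex S" unfolding S_def by simp
    show "((\<lambda>s. F s - s * Ft t) has_field_derivative Ft z - Ft t) (at z within S)" if "z \<in> S" for z
    proof -
      have "(F has_field_derivative Ft z) (at z within S)"
        using has_field_derivative_subset[OF dF sub] that sub by blast
      then show ?thesis by (auto intro!: derivative_eq_intros)
    qed
    show "norm (Ft z - Ft t) \<le> Cw * \<tau>" if "z \<in> S" for z using a that by simp
  qed (use tS in auto)
  then show ?thesis using t by (simp add: power2_eq_square algebra_simps)
qed



lemma wlem: "(w::real) \<noteq> 0 \<Longrightarrow> L * (9 * C / w * \<tau> + 9 * C / w * h2) = 9 * C * L * (\<tau> + h2) / w"
  by (simp add: field_simps)

lemma trunc: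
  fixes \<theta> \<theta>t \<theta>tt :: "real \<Rightarrow> real \<Rightarrow> real" and c g d t0 C h \<tau> t x :: real
  assumes smooth_x: "\<And>k x t. t \<in> {0..t0} \<Longrightarrow> ((deriv ^^ k) (\<lambda>y. \<theta> y t)) differentiable (at x)"
    and deriv_t: "\<And>x t. t \<in> {0..t0} \<Longrightarrow> ((\<lambda>s. \<theta> x s) has_real_derivative \<theta>t x t) (at t within {0..t0})"
    and deriv_tt: "\<And>x t. t \<in> {0..t0} \<Longrightarrow> ((\<lambda>s. \<theta>t x s) has_real_derivative \<theta>tt x t) (at t within {0..t0})"
    and pde: "\<And>x t. t \<in> {0..t0} \<Longrightarrow>
               \<theta>t x t + c * dx 1 \<theta> x t + g * \<theta> x t * dx 1 \<theta> x t + d * dx 3 \<theta> x t = 0"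
    and Cb: "\<And>x t. t \<in> {0..t0} \<Longrightarrow> \<bar>\<theta>tt x t\<bar> \<le> C / (1 + x\<^sup>2) \<and> (\<forall>k\<le>5. \<bar>dx k \<theta> x t\<bar> \<le> C / (1 + x\<^sup>2))"
    and h: "0 < h" "h \<le> 1" and tt: "0 \<le> t" "0 < \<tau>" "t + \<tau> \<le> t0"
  shows "\<bar>(\<theta> x (t + \<tau>) - \<theta> x t) / \<tau> + (c * (\<theta> (x + h) t - \<theta> (x - h) t) / (2 * h)
            + g * \<theta> x t * (\<theta> (x + h) t - \<theta> (x - h) t) / (2 * h)
            + (d - c * h\<^sup>2 / 6) * (\<theta> (x + 2 * h) t - 2 * \<theta> (x + h) t + 2 * \<theta> (x - h) t - \<theta> (x - 2 * h) t) / (2 * h ^ 3))\<bar>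
         \<le> 9 * C * (1 + 3 * \<bar>c\<bar> + \<bar>g\<bar> * C + \<bar>d\<bar>) * (\<tau> + h\<^sup>2) / (1 + x\<^sup>2)"
proof -
  have tin: "t \<in> {0..t0}" using tt by auto
  define f where "f = (\<lambda>y. \<theta> y t)"
  have sm: "\<And>m x. (deriv ^^ m) f differentiable (at x)" unfolding f_def using smooth_x[OF tin] by blast
  have Cx: "\<And>z k. k \<le> 5 \<Longrightarrow> \<bar>(deriv ^^ k) f z\<bar> \<le> C / (1 + z\<^sup>2)"
    using Cb[OF tin] unfolding f_def dx_def by blast
  have C0: "C \<ge> 0" using Cx[of 0 0] by simp
  define B where "B = 9 * C / (1 + x\<^sup>2)"
  define Cw where "Cw = C / (1 + x\<^sup>2)"
  have xpos: "1 + x\<^sup>2 > 0" by (simp add: add_pos_nonneg)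
  have CwB: "Cw \<le> B" unfolding Cw_def B_def using C0 xpos by (simp add: divide_right_mono)
  have Cw0: "Cw \<ge> 0" unfolding Cw_def using C0 xpos by simp
  define D1 where "D1 = (deriv ^^ 1) f x"
  define D3 where "D3 = (deriv ^^ 3) f x"
  define a1 where "a1 = (\<theta> (x + h) t - \<theta> (x - h) t) / (2 * h)"
  define a3 where "a3 = (\<theta> (x + 2 * h) t - 2 * \<theta> (x + h) t + 2 * \<theta> (x - h) t - \<theta> (x - 2 * h) t) / (2 * h ^ 3)"
  define th where "th = \<theta> x t"
  define e where "e = d - c * h\<^sup>2 / 6"
  have e1: "\<bar>a1 - D1\<bar> \<le> B * h\<^sup>2"
    using central1[OF sm _ h, of C x] Cx unfolding a1_def D1_def B_def f_def by auto
  have e3: "\<bar>a3 - D3\<bar> \<le> B * h\<^sup>2"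
    using central3[OF sm _ h, of C x] Cx unfolding a3_def D3_def B_def f_def by auto
  have pd: "\<theta>t x t = - (c * D1 + g * th * D1 + d * D3)"
    using pde[OF tin, of x] unfolding D1_def D3_def th_def f_def dx_def by linarith
  have time: "\<bar>\<theta> x (t + \<tau>) - \<theta> x t - \<tau> * \<theta>t x t\<bar> \<le> Cw * \<tau>\<^sup>2"
  proof (rule time_est[of t0 "\<lambda>s. \<theta> x s" "\<theta>t x" "\<theta>tt x"])
    show "\<And>s. s \<in> {0..t0} \<Longrightarrow> ((\<lambda>s. \<theta> x s) has_real_derivative \<theta>t x s) (at s within {0..t0})" by (rule deriv_t)
    show "\<And>s. s \<in> {0..t0} \<Longrightarrow> (\<theta>t x has_real_derivative \<theta>tt x s) (at s within {0..t0})"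
      using deriv_tt by (simp add: eta_contract_eq)
    show "\<And>s. s \<in> {0..t0} \<Longrightarrow> \<bar>\<theta>tt x s\<bar> \<le> Cw" unfolding Cw_def using Cb by blast
  qed (use tt in auto)
  define T1 where "T1 = (\<theta> x (t + \<tau>) - \<theta> x t) / \<tau> - \<theta>t x t"
  have t1: "\<bar>T1\<bar> \<le> B * \<tau>"
  proof -
    have "T1 = (\<theta> x (t + \<tau>) - \<theta> x t - \<tau> * \<theta>t x t) / \<tau>" unfolding T1_def using tt by (simp add: field_simps)
    then have "\<bar>T1\<bar> = \<bar>\<theta> x (t + \<tau>) - \<theta> x t - \<tau> * \<theta>t x t\<bar> / \<tau>" using tt by simp
    also have "\<dots> \<le> Cw * \<tau>\<^sup>2 / \<tau>" using time tt by (intro divide_right_mono) auto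
    also have "\<dots> = Cw * \<tau>" using tt by (simp add: power2_eq_square)
    also have "\<dots> \<le> B * \<tau>" using CwB tt by (intro mult_right_mono) auto
    finally show ?thesis .
  qed
  have eq: "(\<theta> x (t + \<tau>) - \<theta> x t) / \<tau> + (c * (\<theta> (x + h) t - \<theta> (x - h) t) / (2 * h)
            + g * \<theta> x t * (\<theta> (x + h) t - \<theta> (x - h) t) / (2 * h)
            + (d - c * h\<^sup>2 / 6) * (\<theta> (x + 2 * h) t - 2 * \<theta> (x + h) t + 2 * \<theta> (x - h) t - \<theta> (x - 2 * h) t) / (2 * h ^ 3))
        = T1 + c * (a1 - D1) + (g * th) * (a1 - D1) + e * (a3 - D3) - (c * h\<^sup>2 / 6) * D3"
    unfolding T1_def a1_def a3_def e_def th_def pd by (simp add: algebra_simps)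
  have th_b: "\<bar>th\<bar> \<le> C"
  proof -
    have "\<bar>th\<bar> \<le> C / (1 + x\<^sup>2)" using Cx[of 0 x] unfolding th_def f_def by simp
    also have "\<dots> \<le> C" using C0 xpos by (simp add: divide_le_eq mult_le_cancel_left1)
    finally show ?thesis .
  qed
  have D3b: "\<bar>D3\<bar> \<le> B" using Cx[of 3 x] CwB unfolding D3_def Cw_def by simp
  have eb: "\<bar>e\<bar> \<le> \<bar>d\<bar> + \<bar>c\<bar>"
  proof -
    have "h\<^sup>2 \<le> 1" using h by (simp add: power_le_one)
    then have "\<bar>c\<bar> * h\<^sup>2 \<le> \<bar>c\<bar> * 1" by (rule mult_left_mono) simp
    then have "\<bar>c * h\<^sup>2 / 6\<bar> \<le> \<bar>c\<bar>" by (simp add: abs_mult)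
    then show ?thesis unfolding e_def by linarith
  qed
  define P where "P = B * h\<^sup>2"
  define Q where "Q = B * \<tau>"
  have P0: "P \<ge> 0" unfolding P_def B_def using C0 xpos by simp
  have Q0: "Q \<ge> 0" unfolding Q_def B_def using C0 xpos tt by simp
  have b2: "\<bar>c * (a1 - D1)\<bar> \<le> \<bar>c\<bar> * P" unfolding P_def abs_mult using e1 by (intro mult_left_mono) auto
  have b3: "\<bar>(g * th) * (a1 - D1)\<bar> \<le> (\<bar>g\<bar> * C) * P" unfolding P_def abs_mult
    using e1 th_b by (intro mult_mono) auto
  have b4: "\<bar>e * (a3 - D3)\<bar> \<le> (\<bar>d\<bar> + \<bar>c\<bar>) * P" unfolding P_def abs_mult
    using e3 eb by (intro mult_mono) auto
  have b5: "\<bar>(c * h\<^sup>2 / 6) * D3\<bar> \<le> \<bar>c\<bar> * P"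
  proof -
    have "h\<^sup>2 \<le> 1" using h by (simp add: power_le_one)
    have "\<bar>(c * h\<^sup>2 / 6) * D3\<bar> = \<bar>c\<bar> * (h\<^sup>2 / 6 * \<bar>D3\<bar>)" by (simp add: abs_mult)
    also have "\<dots> \<le> \<bar>c\<bar> * (h\<^sup>2 * B)"
    proof (rule mult_left_mono)
      have "h\<^sup>2 * \<bar>D3\<bar> \<le> h\<^sup>2 * B" using D3b by (rule mult_left_mono) simp
      moreover have "0 \<le> h\<^sup>2 * B" using D3b by simp
      ultimately show "h\<^sup>2 / 6 * \<bar>D3\<bar> \<le> h\<^sup>2 * B" by simp
    qed simp
    finally show ?thesis unfolding P_def by (simp add: mult.commute)
  qed
  have tot: "\<bar>T1 + c * (a1 - D1) + (g * th) * (a1 - D1) + e * (a3 - D3) - (c * h\<^sup>2 / 6) * D3\<bar>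
       \<le> Q + \<bar>c\<bar> * P + (\<bar>g\<bar> * C) * P + (\<bar>d\<bar> + \<bar>c\<bar>) * P + \<bar>c\<bar> * P"
    using t1 b2 b3 b4 b5 unfolding Q_def by (smt (verit))
  define K' where "K' = 3 * \<bar>c\<bar> + \<bar>g\<bar> * C + \<bar>d\<bar>"
  have K0: "K' \<ge> 0" unfolding K'_def using C0 by simp
  have "Q + \<bar>c\<bar> * P + (\<bar>g\<bar> * C) * P + (\<bar>d\<bar> + \<bar>c\<bar>) * P + \<bar>c\<bar> * P = Q + K' * P"
    unfolding K'_def by (simp add: algebra_simps)
  also have "\<dots> \<le> (1 + 3 * \<bar>c\<bar> + \<bar>g\<bar> * C + \<bar>d\<bar>) * (Q + P)"
  proof -
    have "0 \<le> K' * Q" using K0 Q0 by simp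
    then show ?thesis using P0 unfolding K'_def by (simp add: algebra_simps)
  qed
  also have "\<dots> = 9 * C * (1 + 3 * \<bar>c\<bar> + \<bar>g\<bar> * C + \<bar>d\<bar>) * (\<tau> + h\<^sup>2) / (1 + x\<^sup>2)"
    unfolding Q_def P_def B_def by (rule wlem) (use xpos in simp)
  finally show ?thesis unfolding eq using tot by linarith
qed



lemma abs_le_of_sq: "(x::real)\<^sup>2 \<le> h\<^sup>2 \<Longrightarrow> 0 \<le> h \<Longrightarrow> \<bar>x\<bar> \<le> h"
  by (metis abs_le_square_iff abs_of_nonneg)

lemma one_step:
  fixes \<theta> \<theta>t \<theta>tt :: "real \<Rightarrow> real \<Rightarrow> real" and c g d t0 C K h \<tau> :: real
    and E :: "nat \<Rightarrow> int \<Rightarrow> real" and j :: nat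
  assumes smooth_x: "\<And>k x t. t \<in> {0..t0} \<Longrightarrow> ((deriv ^^ k) (\<lambda>y. \<theta> y t)) differentiable (at x)"
    and deriv_t: "\<And>x t. t \<in> {0..t0} \<Longrightarrow> ((\<lambda>s. \<theta> x s) has_real_derivative \<theta>t x t) (at t within {0..t0})"
    and deriv_tt: "\<And>x t. t \<in> {0..t0} \<Longrightarrow> ((\<lambda>s. \<theta>t x s) has_real_derivative \<theta>tt x t) (at t within {0..t0})"
    and pde: "\<And>x t. t \<in> {0..t0} \<Longrightarrow>
               \<theta>t x t + c * dx 1 \<theta> x t + g * \<theta> x t * dx 1 \<theta> x t + d * dx 3 \<theta> x t = 0"
    and Cb: "\<And>x t. t \<in> {0..t0} \<Longrightarrow> \<bar>\<theta>tt x t\<bar> \<le> C / (1 + x\<^sup>2) \<and> (\<forall>k\<le>5. \<bar>dx k \<theta> x t\<bar> \<le> C / (1 + x\<^sup>2))"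
    and h: "0 < h" "h \<le> 1" and tau: "0 < \<tau>" "\<tau> \<le> K * h ^ 6"
    and E_def: "E = (\<lambda>j i. kdv_scheme c g d h \<tau> (\<lambda>i. \<theta> (real_of_int i * h) 0) j i - \<theta> (real_of_int i * h) (real j * \<tau>))"
    and jt: "real (Suc j) * \<tau> \<le> t0" and LE: "L2 (E j)" and small: "sq (E j) \<le> h\<^sup>2"
  defines "R \<equiv> 9 * C * (1 + 3 * \<bar>c\<bar> + \<bar>g\<bar> * C + \<bar>d\<bar>)"
    and "Lc \<equiv> 2 * \<bar>g\<bar> * C + \<bar>g\<bar> * (C + 2) + 1 + 48 * K * (\<bar>c\<bar> + (\<bar>d\<bar> + \<bar>c\<bar>))\<^sup>2 + 6 * g\<^sup>2 * C\<^sup>2 * K + 6 * g\<^sup>2 * (C + 1)\<^sup>2 * K"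
  shows "L2 (E (Suc j))"
    and "h * sq (E (Suc j)) \<le> (1 + \<tau> * Lc) * (h * sq (E j)) + \<tau> * ((1 + 3 * K) * (5 * R\<^sup>2)) * (\<tau> + h\<^sup>2)\<^sup>2"
proof -
  define t where "t = real j * \<tau>"
  have t0: "0 \<le> t" unfolding t_def using tau by simp
  have tt: "t + \<tau> \<le> t0" using jt unfolding t_def by (simp add: algebra_simps)
  have tin: "t \<in> {0..t0}" using t0 tt tau by auto
  define u where "u = kdv_scheme c g d h \<tau> (\<lambda>i. \<theta> (real_of_int i * h) 0) j"
  define v where "v = (\<lambda>i. \<theta> (real_of_int i * h) t)"
  define e where "e = d - c * h\<^sup>2 / 6"
  define Dv where "Dv = (\<lambda>i. (v (i + 1) - v (i - 1)) / (2 * h))"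
  define r where "r = (\<lambda>i. (\<theta> (real_of_int i * h) (t + \<tau>) - \<theta> (real_of_int i * h) t) / \<tau>
      + (c * (\<theta> (real_of_int i * h + h) t - \<theta> (real_of_int i * h - h) t) / (2 * h)
            + g * \<theta> (real_of_int i * h) t * (\<theta> (real_of_int i * h + h) t - \<theta> (real_of_int i * h - h) t) / (2 * h)
            + (d - c * h\<^sup>2 / 6) * (\<theta> (real_of_int i * h + 2 * h) t - 2 * \<theta> (real_of_int i * h + h) t
                 + 2 * \<theta> (real_of_int i * h - h) t - \<theta> (real_of_int i * h - 2 * h) t) / (2 * h ^ 3)))"
  have g1: "\<And>i. real_of_int (i + 1) * h = real_of_int i * h + h" by (simp add: algebra_simps)
  have g2: "\<And>i. real_of_int (i - 1) * h = real_of_int i * h - h" by (simp add: algebra_simps)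
  have g3: "\<And>i. real_of_int (i + 2) * h = real_of_int i * h + 2 * h" by (simp add: algebra_simps)
  have g4: "\<And>i. real_of_int (i - 2) * h = real_of_int i * h - 2 * h" by (simp add: algebra_simps)
  have tS: "real (Suc j) * \<tau> = t + \<tau>" unfolding t_def by (simp add: algebra_simps)
  have Ej: "E j = (\<lambda>i. u i - v i)" unfolding E_def u_def v_def t_def by simp
  have rec: "E (Suc j) i = E j i - \<tau> * ((c / (2 * h) * (E j (i+1) - E j (i-1)) + e / (2 * h ^ 3) * (E j (i+2) - 2 * E j (i+1) + 2 * E j (i-1) - E j (i-2)))
                 + (g * Dv i * E j i + g / (2 * h) * u i * (E j (i+1) - E j (i-1))) + r i)" for i
  proof -
    have "E (Suc j) i = (u i - \<tau> * (c * (u (i+1) - u (i-1)) / (2*h) + g * u i * (u (i+1) - u (i-1)) / (2*h)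
                 + e * (u (i+2) - 2 * u (i+1) + 2 * u (i-1) - u (i-2)) / (2 * h^3))) - \<theta> (real_of_int i * h) (t + \<tau>)"
      unfolding E_def u_def e_def tS by (simp add: Let_def)
    also have "\<dots> = E j i - \<tau> * ((c / (2 * h) * (E j (i+1) - E j (i-1)) + e / (2 * h ^ 3) * (E j (i+2) - 2 * E j (i+1) + 2 * E j (i-1) - E j (i-2)))
                 + (g * Dv i * E j i + g / (2 * h) * u i * (E j (i+1) - E j (i-1))) + r i)"
      unfolding Ej Dv_def r_def v_def e_def[symmetric] g1 g2 g3 g4 using h tau
      by (simp add: field_simps)
    finally show ?thesis .
  qed
  define f where "f = (\<lambda>y. \<theta> y t)"
  have sm: "\<And>m x. (deriv ^^ m) f differentiable (at x)" unfolding f_def using smooth_x[OF tin] by blast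
  have Cx: "\<And>z k. k \<le> 5 \<Longrightarrow> \<bar>(deriv ^^ k) f z\<bar> \<le> C / (1 + z\<^sup>2)"
    using Cb[OF tin] unfolding f_def dx_def by blast
  have C0: "C \<ge> 0" using Cx[of 0 0] by simp
  have Cz: "C / (1 + z\<^sup>2) \<le> C" for z
    using C0 by (simp add: divide_le_eq mult_le_cancel_left1 add_pos_nonneg)
  have vb: "\<bar>v i\<bar> \<le> C" for i using Cx[of 0 "real_of_int i * h"] Cz[of "real_of_int i * h"] unfolding v_def f_def by simp
  have lip: "\<bar>f (x + y) - f x\<bar> \<le> C * \<bar>y\<bar>" for x y
  proof (rule lip1[OF sm])
    fix z show "\<bar>(deriv ^^ 1) f z\<bar> \<le> C" using order.trans[OF Cx[of 1 z] Cz[of z]] by simp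
  qed
  have vdiff: "\<bar>v i - v (i + 1)\<bar> \<le> C * h" for i
    using lip[of "real_of_int i * h" h] h unfolding v_def f_def g1 by (simp add: abs_minus_commute)
  have Dvb: "\<bar>Dv i\<bar> \<le> C" for i
  proof -
    have "\<bar>v (i + 1) - v (i - 1)\<bar> \<le> C * (2 * h)"
      using lip[of "real_of_int i * h - h" "2 * h"] h unfolding v_def f_def g1 g2 by (simp add: algebra_simps)
    then show ?thesis unfolding Dv_def using h by (simp add: abs_divide divide_le_eq algebra_simps)
  qed
  have Eb: "\<bar>E j i\<bar> \<le> h" for i
    using abs_le_of_sq[OF order.trans[OF sq_ge_term[OF LE] small]] h by simp
  have ub: "\<bar>u i\<bar> \<le> C + 1" for i
  proof -
    have "u i = v i + E j i" unfolding Ej by simp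
    then show ?thesis using vb[of i] Eb[of i] h by linarith
  qed
  have udiff: "\<bar>u i - u (i + 1)\<bar> \<le> (C + 2) * h" for i
  proof -
    have "u i - u (i + 1) = (v i - v (i + 1)) + E j i - E j (i + 1)" unfolding Ej by simp
    then show ?thesis using vdiff[of i] Eb[of i] Eb[of "i+1"] by (simp add: algebra_simps)
  qed
  have eb: "\<bar>e\<bar> \<le> \<bar>d\<bar> + \<bar>c\<bar>"
  proof -
    have "h\<^sup>2 \<le> 1" using h by (simp add: power_le_one)
    then have "\<bar>c\<bar> * h\<^sup>2 \<le> \<bar>c\<bar> * 1" by (rule mult_left_mono) simp
    then have "\<bar>c * h\<^sup>2 / 6\<bar> \<le> \<bar>c\<bar>" by (simp add: abs_mult)
    then show ?thesis unfolding e_def by linarith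
  qed
  have rb: "\<bar>r i\<bar> \<le> (R * (\<tau> + h\<^sup>2)) * wt h i" for i
  proof -
    have "\<bar>r i\<bar> \<le> R * (\<tau> + h\<^sup>2) / (1 + (real_of_int i * h)\<^sup>2)"
      unfolding r_def R_def
      by (rule trunc[OF smooth_x deriv_t deriv_tt pde Cb h t0 tau(1) tt])
    then show ?thesis unfolding wt_def by simp
  qed
  have Lr: "L2 r" and hr: "h * sq r \<le> 5 * (R * (\<tau> + h\<^sup>2))\<^sup>2"
    using L2_wt[OF h rb] by auto
  note es = energy_step[of "E j" r h \<tau> K Dv C u "C + 1" "C + 2" e "\<bar>d\<bar> + \<bar>c\<bar>" "E (Suc j)" c g,
      OF LE Lr h tau Dvb ub udiff eb rec]
  show "L2 (E (Suc j))" by (rule es(1))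
  have K0: "K \<ge> 0" using tau h by (smt (verit) zero_less_power mult_nonpos_nonneg)
  have "h * sq (E (Suc j)) \<le> h * ((1 + \<tau> * Lc) * sq (E j) + \<tau> * (1 + 3 * K) * sq r)"
    using es(2) h unfolding Lc_def by (intro mult_left_mono) auto
  also have "\<dots> = (1 + \<tau> * Lc) * (h * sq (E j)) + \<tau> * (1 + 3 * K) * (h * sq r)" by (simp add: algebra_simps)
  also have "\<dots> \<le> (1 + \<tau> * Lc) * (h * sq (E j)) + \<tau> * (1 + 3 * K) * (5 * (R * (\<tau> + h\<^sup>2))\<^sup>2)"
    using hr tau K0 by (intro add_left_mono mult_left_mono) auto
  also have "\<dots> = (1 + \<tau> * Lc) * (h * sq (E j)) + \<tau> * ((1 + 3 * K) * (5 * R\<^sup>2)) * (\<tau> + h\<^sup>2)\<^sup>2"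
    unfolding power_mult_distrib by (simp add: ac_simps)
  finally show "h * sq (E (Suc j)) \<le> (1 + \<tau> * Lc) * (h * sq (E j)) + \<tau> * ((1 + 3 * K) * (5 * R\<^sup>2)) * (\<tau> + h\<^sup>2)\<^sup>2" .
qed



theorem mainTheorem4:
  fixes c g d t0 K :: real
    and \<theta> \<theta>t \<theta>tt :: "real \<Rightarrow> real \<Rightarrow> real"
  assumes t0_pos: "t0 > 0"
    and smooth_x: "\<And>k x t. t \<in> {0..t0} \<Longrightarrow> ((deriv ^^ k) (\<lambda>y. \<theta> y t)) differentiable (at x)"
    and deriv_t: "\<And>x t. t \<in> {0..t0} \<Longrightarrow> ((\<lambda>s. \<theta> x s) has_real_derivative \<theta>t x t) (at t within {0..t0})"
    and deriv_tt: "\<And>x t. t \<in> {0..t0} \<Longrightarrow> ((\<lambda>s. \<theta>t x s) has_real_derivative \<theta>tt x t) (at t within {0..t0})"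
    and pde: "\<And>x t. t \<in> {0..t0} \<Longrightarrow>
               \<theta>t x t + c * dx 1 \<theta> x t + g * \<theta> x t * dx 1 \<theta> x t + d * dx 3 \<theta> x t = 0"
    and decay: "\<exists>C. \<forall>x. \<forall>t\<in>{0..t0}. \<bar>\<theta>tt x t\<bar> \<le> C / (1 + x\<^sup>2) \<and>
                     (\<forall>k\<le>5. \<bar>dx k \<theta> x t\<bar> \<le> C / (1 + x\<^sup>2))"
  shows "\<exists>M h0. h0 > 0 \<and> (\<forall>h \<tau>. 0 < h \<longrightarrow> h < h0 \<longrightarrow> 0 < \<tau> \<longrightarrow> \<tau> \<le> K * h ^ 6 \<longrightarrow>
           (\<forall>j::nat. real j * \<tau> \<le> t0 \<longrightarrow>
              (let err = (\<lambda>i::int. (kdv_scheme c g d h \<tau> (\<lambda>i. \<theta> (real_of_int i * h) 0) j i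
                                     - \<theta> (real_of_int i * h) (real j * \<tau>))\<^sup>2 * h)
               in err summable_on UNIV \<and> sqrt (infsum err UNIV) \<le> M * (\<tau> + h\<^sup>2))))"
proof (cases "K > 0")
  case False
  have nf: "\<And>h \<tau>::real. 0 < h \<Longrightarrow> 0 < \<tau> \<Longrightarrow> \<tau> \<le> K * h ^ 6 \<Longrightarrow> False"
  proof -
    fix h \<tau> :: real assume "0 < h" "0 < \<tau>" "\<tau> \<le> K * h ^ 6"
    moreover have "K * h ^ 6 \<le> 0" using False \<open>0 < h\<close> by (simp add: mult_nonpos_nonneg)
    ultimately show False by linarith
  qed
  show ?thesis by (intro exI[of _ 0] exI[of _ 1] conjI) (simp, blast dest: nf)
next
  case True
  obtain C where Cb0: "\<forall>x. \<forall>t\<in>{0..t0}. \<bar>\<theta>tt x t\<bar> \<le> C / (1 + x\<^sup>2) \<and> (\<forall>k\<le>5. \<bar>dx k \<theta> x t\<bar> \<le> C / (1 + x\<^sup>2))"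
    using decay by blast
  have Cb: "\<And>x t. t \<in> {0..t0} \<Longrightarrow> \<bar>\<theta>tt x t\<bar> \<le> C / (1 + x\<^sup>2) \<and> (\<forall>k\<le>5. \<bar>dx k \<theta> x t\<bar> \<le> C / (1 + x\<^sup>2))"
    using Cb0 by blast
  define R where "R = 9 * C * (1 + 3 * \<bar>c\<bar> + \<bar>g\<bar> * C + \<bar>d\<bar>)"
  define Lc where "Lc = 2 * \<bar>g\<bar> * C + \<bar>g\<bar> * (C + 2) + 1 + 48 * K * (\<bar>c\<bar> + (\<bar>d\<bar> + \<bar>c\<bar>))\<^sup>2 + 6 * g\<^sup>2 * C\<^sup>2 * K + 6 * g\<^sup>2 * (C + 1)\<^sup>2 * K"
  define Q0 where "Q0 = (1 + 3 * K) * (5 * R\<^sup>2)"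
  define M2 where "M2 = t0 * Q0 * exp (Lc * t0)"
  define h0 where "h0 = 1 / (1 + M2 * (K + 1)\<^sup>2)"
  have C0: "C \<ge> 0"
  proof -
    have "0 \<in> {0..t0}" using t0_pos by simp
    then have "\<bar>dx 0 \<theta> 0 0\<bar> \<le> C / (1 + 0\<^sup>2)" using Cb[of 0 0] by blast
    then show ?thesis by simp
  qed
  have Lc0: "Lc \<ge> 0" unfolding Lc_def using C0 True by simp
  have Q00: "Q0 \<ge> 0" unfolding Q0_def using True by simp
  have M20: "M2 \<ge> 0" unfolding M2_def using t0_pos Q00 by simp
  have h0pos: "h0 > 0" unfolding h0_def using M20 by (simp add: add_pos_nonneg)
  have main: "\<forall>h \<tau>. 0 < h \<longrightarrow> h < h0 \<longrightarrow> 0 < \<tau> \<longrightarrow> \<tau> \<le> K * h ^ 6 \<longrightarrow>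
           (\<forall>j::nat. real j * \<tau> \<le> t0 \<longrightarrow>
              (let err = (\<lambda>i::int. (kdv_scheme c g d h \<tau> (\<lambda>i. \<theta> (real_of_int i * h) 0) j i
                                     - \<theta> (real_of_int i * h) (real j * \<tau>))\<^sup>2 * h)
               in err summable_on UNIV \<and> sqrt (infsum err UNIV) \<le> sqrt M2 * (\<tau> + h\<^sup>2)))"
  proof (intro allI impI)
    fix h \<tau> :: real and j :: nat
    assume h: "0 < h" "h < h0" and tau: "0 < \<tau>" "\<tau> \<le> K * h ^ 6" and jt: "real j * \<tau> \<le> t0"
    have h0le: "h0 \<le> 1" unfolding h0_def using M20 by (simp add: divide_le_eq)
    have h1: "h \<le> 1" using h h0le by simp
    have hsmall: "M2 * (K + 1)\<^sup>2 * h \<le> 1"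
    proof -
      have "h * (1 + M2 * (K + 1)\<^sup>2) < 1" using h unfolding h0_def using M20
        by (simp add: less_divide_eq add_pos_nonneg mult.commute)
      then show ?thesis using h by (simp add: algebra_simps)
    qed
    define E where "E = (\<lambda>j i. kdv_scheme c g d h \<tau> (\<lambda>i. \<theta> (real_of_int i * h) 0) j i - \<theta> (real_of_int i * h) (real j * \<tau>))"
    define X where "X = Q0 * (\<tau> + h\<^sup>2)\<^sup>2"
    have X0: "X \<ge> 0" unfolding X_def using Q00 by simp
    have tauK: "\<tau> + h\<^sup>2 \<le> (K + 1) * h\<^sup>2"
    proof -
      have "h ^ 6 \<le> h\<^sup>2" using h h1 by (simp add: power_decreasing)
      then have "K * h ^ 6 \<le> K * h\<^sup>2" using True by (intro mult_left_mono) auto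
      then show ?thesis using tau by (simp add: algebra_simps)
    qed
    have MX: "t0 * X * exp (Lc * t0) = M2 * (\<tau> + h\<^sup>2)\<^sup>2" unfolding X_def M2_def by (simp add: algebra_simps)
    have claim: "real j * \<tau> \<le> t0 \<longrightarrow> L2 (E j) \<and> h * sq (E j) \<le> real j * \<tau> * X * exp (Lc * (real j * \<tau>))" for j
    proof (induction j)
      case 0
      have "E 0 = (\<lambda>i. 0)" unfolding E_def by simp
      then show ?case by (simp add: L2_def sq_def)
    next
      case (Suc j)
      show ?case
      proof
        assume jt': "real (Suc j) * \<tau> \<le> t0"
        have jt0: "real j * \<tau> \<le> t0" using jt' tau by (simp add: algebra_simps)
        with Suc.IH have LE: "L2 (E j)" and bj: "h * sq (E j) \<le> real j * \<tau> * X * exp (Lc * (real j * \<tau>))" by auto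
        have "h * sq (E j) \<le> t0 * X * exp (Lc * t0)"
        proof -
          have "real j * \<tau> * X \<le> t0 * X" using jt0 X0 by (intro mult_right_mono) auto
          moreover have "exp (Lc * (real j * \<tau>)) \<le> exp (Lc * t0)" using jt0 Lc0 by (simp add: mult_left_mono)
          ultimately have "real j * \<tau> * X * exp (Lc * (real j * \<tau>)) \<le> t0 * X * exp (Lc * t0)"
            using t0_pos X0 tau jt0 by (intro mult_mono) auto
          then show ?thesis using bj by linarith
        qed
        also have "\<dots> = M2 * (\<tau> + h\<^sup>2)\<^sup>2" by (rule MX)
        also have "\<dots> \<le> M2 * ((K + 1) * h\<^sup>2)\<^sup>2"
          using tauK tau M20 by (intro mult_left_mono power_mono) auto
        also have "\<dots> = (M2 * (K + 1)\<^sup>2 * h) * h\<^sup>2 * h" by (simp add: power2_eq_square algebra_simps)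
        also have "\<dots> \<le> 1 * h\<^sup>2 * h" using hsmall h by (intro mult_right_mono) auto
        finally have "h * sq (E j) \<le> h\<^sup>2 * h" by simp
        then have small: "sq (E j) \<le> h\<^sup>2" using h by (simp add: mult.commute)
        note os = one_step[OF smooth_x deriv_t deriv_tt pde Cb h(1) h1 tau E_def jt' LE small]
        have L2S: "L2 (E (Suc j))" by (rule os(1))
        have "h * sq (E (Suc j)) \<le> (1 + \<tau> * Lc) * (h * sq (E j)) + \<tau> * X"
          using os(2) unfolding Lc_def X_def Q0_def R_def by (simp add: mult.assoc)
        also have "\<dots> \<le> exp (\<tau> * Lc) * (real j * \<tau> * X * exp (Lc * (real j * \<tau>))) + \<tau> * X"
        proof -
          have "1 + \<tau> * Lc \<le> exp (\<tau> * Lc)" by (rule exp_ge_add_one_self)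
          moreover have "0 \<le> h * sq (E j)" using h sq_nonneg by simp
          ultimately have "(1 + \<tau> * Lc) * (h * sq (E j)) \<le> exp (\<tau> * Lc) * (real j * \<tau> * X * exp (Lc * (real j * \<tau>)))"
            by (intro mult_mono[OF _ bj]) auto
          then show ?thesis by simp
        qed
        also have "\<dots> \<le> real (Suc j) * \<tau> * X * exp (Lc * (real (Suc j) * \<tau>))"
        proof -
          have ex: "exp (\<tau> * Lc) * exp (Lc * (real j * \<tau>)) = exp (Lc * (real (Suc j) * \<tau>))"
            by (simp add: exp_add[symmetric] algebra_simps)
          have e1: "1 \<le> exp (Lc * (real (Suc j) * \<tau>))" using Lc0 tau by simp
          define W where "W = exp (Lc * (real (Suc j) * \<tau>))"
          have "\<tau> * X * 1 \<le> \<tau> * X * W"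
            unfolding W_def using e1 tau X0 by (intro mult_left_mono) auto
          moreover have "exp (\<tau> * Lc) * (real j * \<tau> * X * exp (Lc * (real j * \<tau>)))
                 = real j * \<tau> * X * W"
            unfolding W_def ex[symmetric] by (simp add: algebra_simps)
          moreover have "real (Suc j) * \<tau> * X * W = real j * \<tau> * X * W + \<tau> * X * W"
            by (simp add: algebra_simps)
          ultimately show ?thesis unfolding W_def[symmetric] by linarith
        qed
        finally show "L2 (E (Suc j)) \<and> h * sq (E (Suc j)) \<le> real (Suc j) * \<tau> * X * exp (Lc * (real (Suc j) * \<tau>))"
          using L2S by simp
      qed
    qed
    from claim[of j] jt have LE: "L2 (E j)" and bj: "h * sq (E j) \<le> real j * \<tau> * X * exp (Lc * (real j * \<tau>))" by auto
    have bnd: "h * sq (E j) \<le> M2 * (\<tau> + h\<^sup>2)\<^sup>2"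
    proof -
      have "real j * \<tau> * X \<le> t0 * X" using jt X0 by (intro mult_right_mono) auto
      moreover have "exp (Lc * (real j * \<tau>)) \<le> exp (Lc * t0)" using jt Lc0 by (simp add: mult_left_mono)
      ultimately have "real j * \<tau> * X * exp (Lc * (real j * \<tau>)) \<le> t0 * X * exp (Lc * t0)"
        using t0_pos X0 tau jt by (intro mult_mono) auto
      then show ?thesis using bj MX by linarith
    qed
    define err where "err = (\<lambda>i::int. (kdv_scheme c g d h \<tau> (\<lambda>i. \<theta> (real_of_int i * h) 0) j i
                                     - \<theta> (real_of_int i * h) (real j * \<tau>))\<^sup>2 * h)"
    have err_eq: "err = (\<lambda>i. (E j i)\<^sup>2 * h)" unfolding err_def E_def by simp
    have s: "err summable_on UNIV" unfolding err_eq using LE unfolding L2_def by (rule summable_on_cmult_left)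
    have "infsum err UNIV = sq (E j) * h" unfolding err_eq sq_def by (rule infsum_cmult_left') 
    then have "infsum err UNIV \<le> (sqrt M2 * (\<tau> + h\<^sup>2))\<^sup>2"
      using bnd M20 by (simp add: power_mult_distrib mult.commute)
    then have "sqrt (infsum err UNIV) \<le> sqrt M2 * (\<tau> + h\<^sup>2)"
      using M20 tau h by (simp add: real_le_lsqrt real_sqrt_le_iff)
    then show "let err = (\<lambda>i::int. (kdv_scheme c g d h \<tau> (\<lambda>i. \<theta> (real_of_int i * h) 0) j i
                                     - \<theta> (real_of_int i * h) (real j * \<tau>))\<^sup>2 * h)
               in err summable_on UNIV \<and> sqrt (infsum err UNIV) \<le> sqrt M2 * (\<tau> + h\<^sup>2)"
      using s unfolding err_def Let_def by simp
  qed
  show ?thesis using main h0pos by blast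
qed

end
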